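(* Let $\delta\in(0,1)$, $\sigma_z^2>0$, let $B\sim p_\beta$ (finite second moment) and $Z\sim N(0,1)$ be independent, and let $\eta(a;\tau)=(|a|-\tau)_+\mathrm{sign}(a)$. Let $(\chi,\hat\sigma,\lambda)$ with $\chi>0$, $\hat\sigma>0$, $\lambda>0$ satisfy \[ \hat{\sigma}^2=\sigma_z^2+\frac{1}{\delta}\mathbb{E}_{B,Z}\left[(\eta(B+\hat{\sigma}Z; \chi \hat{\sigma})-B)^2\right],\qquad \lambda=\chi\hat{\sigma}\left(1-\frac{1}{\delta}\mathbb{P}(|B+\hat{\sigma}Z|>\chi \hat{\sigma})\right), \] where $\hat\sigma=\hat\sigma(\chi)$ is determined by the first equation and $\lambda=\lambda(\chi)$ by the second. Then $\frac{d \lambda}{d \chi} >0$.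
   Context: These equations are the fixed-point equations that describe the asymptotic behavior of the LASSO solution with regularization parameter $\lambda>0$ under Gaussian design; for $\sigma_z^2>0$ the first equation has a unique solution $\hat\sigma$ for each $\chi$. *)

theory Defs
  imports "HOL-Probability.Probability"
begin

definition soft_thresh :: "real \<Rightarrow> real \<Rightarrow> real" where
  "soft_thresh a \<tau> = max (\<bar>a\<bar> - \<tau>) 0 * sgn a"

definition gauss01 :: "real measure" where
  "gauss01 = density lborel std_normal_density"

definition BZ_law :: "real measure \<Rightarrow> (real \<times> real) measure" where
  "BZ_law P = P \<Otimes>\<^sub>M gauss01"

definition lasso_mse :: "real measure \<Rightarrow> real \<Rightarrow> real \<Rightarrow> real" where
  "lasso_mse P chi \<sigma> =
     integral\<^sup>L (BZ_law P)
       (\<lambda>bz. (soft_thresh (fst bz + \<sigma> * snd bz) (chi * \<sigma>) - fst bz)\<^sup>2)"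

definition lasso_prob :: "real measure \<Rightarrow> real \<Rightarrow> real \<Rightarrow> real" where
  "lasso_prob P chi \<sigma> =
     measure (BZ_law P) {bz \<in> space (BZ_law P). \<bar>fst bz + \<sigma> * snd bz\<bar> > chi * \<sigma>}"

definition fp_eq :: "real measure \<Rightarrow> real \<Rightarrow> real \<Rightarrow> real \<Rightarrow> real \<Rightarrow> bool" where
  "fp_eq P \<delta> \<sigma>z2 chi \<sigma> \<longleftrightarrow> \<sigma>\<^sup>2 = \<sigma>z2 + (1 / \<delta>) * lasso_mse P chi \<sigma>"

definition lasso_lambda :: "real measure \<Rightarrow> real \<Rightarrow> real \<Rightarrow> real \<Rightarrow> real" where
  "lasso_lambda P \<delta> chi \<sigma> = chi * \<sigma> * (1 - (1 / \<delta>) * lasso_prob P chi \<sigma>)"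

end

theory Submission
  imports Defs "HOL-Real_Asymp.Real_Asymp"
begin

abbreviation "phi \<equiv> std_normal_density"

lemma phi_eq: "phi x = exp (- x\<^sup>2 / 2) / sqrt (2 * pi)"
  by (simp add: std_normal_density_def)

lemma phi_pos: "0 < phi x" by (simp add: normal_density_pos)

lemma phi_even: "phi (- x) = phi x" by (simp add: phi_eq)

lemma phi_le1: "phi x \<le> 1"
proof -
  have "exp (- x\<^sup>2 / 2) \<le> 1" by simp
  moreover have "1 \<le> sqrt (2 * pi)" using pi_gt3 by simp
  ultimately show ?thesis unfolding phi_eq
    by (meson divide_le_eq_1 exp_gt_zero less_le_trans linorder_not_le zero_less_one order_trans)
qed

lemma phi_deriv[derivative_intros]: "(phi has_real_derivative (- x * phi x)) (at x)"
  unfolding phi_eq[abs_def]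
  by (auto intro!: derivative_eq_intros simp: field_simps)

lemma phi_cont[continuous_intros]: "isCont phi x"
  using phi_deriv DERIV_isCont by blast

lemma tail_FTC:
  fixes f F :: "real \<Rightarrow> real"
  assumes int: "integrable lborel f" and cont: "\<And>x. isCont f x"
    and der: "\<And>x. (F has_real_derivative f x) (at x)"
    and lim: "(F \<longlongrightarrow> L) at_top"
  shows "(\<integral>x. indicator {a..} x * f x \<partial>lborel) = L - F a"
proof -
  have int2: "integrable lborel (\<lambda>x. indicator {a..} x * f x)"
    using int by (intro integrable_mult_indicator[where 'b=real, simplified]) auto
  have t: "((\<lambda>y. \<integral>x. indicator {..y} x *\<^sub>R (indicator {a..} x * f x) \<partial>lborel) \<longlongrightarrow>
            (\<integral>x. indicator {a..} x * f x \<partial>lborel)) at_top"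
    by (rule tendsto_integral_at_top) (auto simp: int2)
  have ev: "\<forall>\<^sub>F y in at_top. (\<integral>x. indicator {..y} x *\<^sub>R (indicator {a..} x * f x) \<partial>lborel) = F y - F a"
    using eventually_ge_at_top[of a]
  proof eventually_elim
    case (elim y)
    have "(\<integral>x. indicator {..y} x *\<^sub>R (indicator {a..} x * f x) \<partial>lborel)
        = (\<integral>x. indicator {a..y} x *\<^sub>R f x \<partial>lborel)"
      by (intro Bochner_Integration.integral_cong) (auto split: split_indicator)
    also have "\<dots> = F y - F a"
      using elim
      by (intro integral_FTC_atLeastAtMost)
         (auto intro!: continuous_at_imp_continuous_on cont
               simp: has_real_derivative_iff_has_vector_derivative[symmetric]
               intro: DERIV_subset[OF der])
    finally show ?case .
  qed
  have "((\<lambda>y. F y - F a) \<longlongrightarrow> (\<integral>x. indicator {a..} x * f x \<partial>lborel)) at_top"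
    using tendsto_cong[OF ev] t by simp
  moreover have "((\<lambda>y. F y - F a) \<longlongrightarrow> L - F a) at_top"
    by (intro tendsto_intros lim)
  ultimately show ?thesis using tendsto_unique[OF trivial_limit_at_top_linorder] by blast
qed

definition Qt :: "real \<Rightarrow> real" where
  "Qt a = (\<integral>x. indicator {a..} x * phi x \<partial>lborel)"

lemma integrable_phi_pow: "integrable lborel (\<lambda>x. x ^ k * phi x)"
  using integrable_std_normal_moment[of k] by (simp add: mult.commute)

lemma integrable_phi: "integrable lborel phi"
  using integrable_phi_pow[of 0] by simp

lemma phi_antider: "\<exists>F. (\<forall>x. (F has_real_derivative phi x) (at x)) \<and> (\<exists>L. (F \<longlongrightarrow> L) at_top)"
proof -
  obtain F where F: "\<And>x::real. (F has_vector_derivative phi x) (at x)"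
    using einterval_antiderivative[of "-\<infinity>" "\<infinity>" phi] phi_cont by auto
  then have F': "\<And>x. (F has_real_derivative phi x) (at x)"
    by (simp add: has_real_derivative_iff_has_vector_derivative)
  have int0: "integrable lborel (\<lambda>x. indicator {0..} x * phi x)"
    using integrable_phi by (intro integrable_mult_indicator[where 'b=real, simplified]) auto
  have t: "((\<lambda>y. \<integral>x. indicator {..y} x *\<^sub>R (indicator {0..} x * phi x) \<partial>lborel) \<longlongrightarrow>
            (\<integral>x. indicator {0..} x * phi x \<partial>lborel)) at_top"
    by (rule tendsto_integral_at_top) (auto simp: int0)
  have ev: "\<forall>\<^sub>F y in at_top. (\<integral>x. indicator {..y} x *\<^sub>R (indicator {0..} x * phi x) \<partial>lborel) = F y - F 0"
    using eventually_ge_at_top[of 0]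
  proof eventually_elim
    case (elim y)
    have "(\<integral>x. indicator {..y} x *\<^sub>R (indicator {0..} x * phi x) \<partial>lborel)
        = (\<integral>x. indicator {0..y} x *\<^sub>R phi x \<partial>lborel)"
      by (intro Bochner_Integration.integral_cong) (auto split: split_indicator)
    also have "\<dots> = F y - F 0"
      using elim
      by (intro integral_FTC_atLeastAtMost)
         (auto intro!: continuous_at_imp_continuous_on phi_cont
               intro: has_vector_derivative_at_within F)
    finally show ?case .
  qed
  have "((\<lambda>y. F y - F 0) \<longlongrightarrow> (\<integral>x. indicator {0..} x * phi x \<partial>lborel)) at_top"
    using tendsto_cong[OF ev] t by simp
  then have "((\<lambda>y. (F y - F 0) + F 0) \<longlongrightarrow> (\<integral>x. indicator {0..} x * phi x \<partial>lborel) + F 0) at_top"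
    by (intro tendsto_intros)
  then show ?thesis using F' by auto
qed

lemma Qt_formula: "\<exists>F L. (\<forall>x. (F has_real_derivative phi x) (at x)) \<and> (F \<longlongrightarrow> L) at_top \<and> (\<forall>a. Qt a = L - F a)"
proof -
  obtain F L where F: "\<And>x. (F has_real_derivative phi x) (at x)" and L: "(F \<longlongrightarrow> L) at_top"
    using phi_antider by blast
  have "Qt a = L - F a" for a
    unfolding Qt_def by (rule tail_FTC[OF integrable_phi phi_cont F L])
  then show ?thesis using F L by blast
qed

lemma Qt_deriv[derivative_intros]: "(Qt has_real_derivative (- phi x)) (at x)"
proof -
  obtain F L where F: "\<And>x. (F has_real_derivative phi x) (at x)" and "(F \<longlongrightarrow> L) at_top"
    and Q: "\<And>a. Qt a = L - F a"
    using Qt_formula by blast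
  have "((\<lambda>a. L - F a) has_real_derivative (- phi x)) (at x)"
    by (auto intro!: derivative_eq_intros F)
  moreover have "Qt = (\<lambda>a. L - F a)" using Q by (simp add: fun_eq_iff)
  ultimately show ?thesis by simp
qed

lemma Qt_cont[continuous_intros]: "isCont Qt x"
  using Qt_deriv DERIV_isCont by blast

lemma Qt_lim: "(Qt \<longlongrightarrow> 0) at_top"
proof -
  obtain F L where F: "\<And>x. (F has_real_derivative phi x) (at x)" and FL: "(F \<longlongrightarrow> L) at_top"
    and Q: "\<And>a. Qt a = L - F a"
    using Qt_formula by blast
  have "((\<lambda>a. L - F a) \<longlongrightarrow> L - L) at_top" by (intro tendsto_intros FL)
  moreover have "Qt = (\<lambda>a. L - F a)" using Q by (simp add: fun_eq_iff)
  ultimately show ?thesis by simp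
qed

lemma Qt_nonneg: "0 \<le> Qt a"
  unfolding Qt_def by (intro integral_nonneg_AE) (auto split: split_indicator)

lemma phi_lim_pow: "((\<lambda>x. x ^ k * phi x) \<longlongrightarrow> 0) at_top"
proof -
  have "((\<lambda>x. x ^ k * phi x) \<longlongrightarrow> 0) at_top" if "even k" for k
  proof -
    have l2: "LIM x at_top. (x::real)\<^sup>2 / 2 :> at_top" by real_asymp
    have "((\<lambda>x. ((x\<^sup>2/2) ^ (k div 2) / exp (x\<^sup>2/2)) * (2 ^ (k div 2) / sqrt (2 * pi))) \<longlongrightarrow> 0 * (2 ^ (k div 2) / sqrt (2 * pi))) at_top"
      by (intro tendsto_intros filterlim_compose[OF tendsto_power_div_exp_0]
             filterlim_at_top_imp_at_infinity l2) auto
    moreover have "(\<lambda>x. ((x\<^sup>2/2) ^ (k div 2) / exp (x\<^sup>2/2)) * (2 ^ (k div 2) / sqrt (2 * pi))) = (\<lambda>x. x ^ k * phi x)"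
    proof
      fix x :: real
      obtain m where k: "k = 2 * m" using \<open>even k\<close> by blast
      have "x ^ k = (x\<^sup>2) ^ m" by (simp add: k power_mult)
      then show "((x\<^sup>2/2) ^ (k div 2) / exp (x\<^sup>2/2)) * (2 ^ (k div 2) / sqrt (2 * pi)) = x ^ k * phi x"
        by (simp add: k phi_eq power_divide exp_minus field_simps)
    qed
    ultimately show ?thesis by simp
  qed
  note e = this
  show ?thesis
  proof (cases "even k")
    case True then show ?thesis using e by blast
  next
    case False
    have "((\<lambda>x. (1/x) * (x ^ (k+1) * phi x)) \<longlongrightarrow> 0 * 0) at_top"
      using False e[of "k+1"]
      by (intro tendsto_mult tendsto_divide_0[OF tendsto_const] filterlim_at_top_imp_at_infinity filterlim_ident) auto
    moreover have "\<forall>\<^sub>F x in at_top. (1/x) * (x ^ (k+1) * phi x) = x ^ k * phi x"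
      using eventually_gt_at_top[of 0] by eventually_elim auto
    ultimately show ?thesis using tendsto_cong by fastforce
  qed
qed

lemma tail1: "(\<integral>x. indicator {a..} x * (x * phi x) \<partial>lborel) = phi a"
proof -
  have "(\<integral>x. indicator {a..} x * (x * phi x) \<partial>lborel) = 0 - (- phi a)"
    using tendsto_minus[OF phi_lim_pow[of 0]]
    by (intro tail_FTC[where F="\<lambda>x. - phi x"])
       (auto intro!: derivative_eq_intros continuous_intros simp: integrable_phi_pow[of 1, simplified]
             tendsto_minus_cancel_left)
  then show ?thesis by simp
qed

lemma tail2: "(\<integral>x. indicator {a..} x * (x\<^sup>2 * phi x) \<partial>lborel) = Qt a + a * phi a"
proof -
  have l: "((\<lambda>x. - (x * phi x) - Qt x) \<longlongrightarrow> - 0 - 0) at_top"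
    using phi_lim_pow[of 1] by (intro tendsto_intros Qt_lim) auto
  have "(\<integral>x. indicator {a..} x * (x\<^sup>2 * phi x) \<partial>lborel) = (- 0 - 0) - (- (a * phi a) - Qt a)"
    using l
    by (intro tail_FTC[where F="\<lambda>x. - (x * phi x) - Qt x"])
       (auto intro!: derivative_eq_intros continuous_intros simp: integrable_phi_pow[of 2, simplified power2_eq_square mult.assoc]
             simp: power2_eq_square algebra_simps)
  then show ?thesis by simp
qed

lemma tail0: "(\<integral>x. indicator {a..} x * phi x \<partial>lborel) = Qt a"
  by (simp add: Qt_def)

lemma full0: "(\<integral>x. phi x \<partial>lborel) = 1"
  by simp

lemma full1: "(\<integral>x. x * phi x \<partial>lborel) = 0"
  using integral_std_normal_moment_odd[of 0] by (simp add: mult.commute)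

lemma full2: "(\<integral>x. x\<^sup>2 * phi x \<partial>lborel) = 1"
  using integral_std_normal_moment_even[of 1] by (simp add: mult.commute)


lemma hb_tail0: "has_bochner_integral lborel (\<lambda>x. indicator {a..} x * phi x) (Qt a)"
proof -
  have "integrable lborel (\<lambda>x. indicator {a..} x * phi x)"
    using integrable_phi by (intro integrable_mult_indicator[where 'b=real, simplified]) auto
  then show ?thesis using tail0[of a] by (simp add: has_bochner_integral_iff)
qed

lemma hb_tail1: "has_bochner_integral lborel (\<lambda>x. indicator {a..} x * (x * phi x)) (phi a)"
proof -
  have "integrable lborel (\<lambda>x. indicator {a..} x * (x * phi x))"
    using integrable_phi_pow[of 1] by (intro integrable_mult_indicator[where 'b=real, simplified]) auto
  then show ?thesis using tail1[of a] by (simp add: has_bochner_integral_iff)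
qed

lemma hb_tail2: "has_bochner_integral lborel (\<lambda>x. indicator {a..} x * (x\<^sup>2 * phi x)) (Qt a + a * phi a)"
proof -
  have "integrable lborel (\<lambda>x. indicator {a..} x * (x\<^sup>2 * phi x))"
    using integrable_phi_pow[of 2] by (intro integrable_mult_indicator[where 'b=real, simplified]) auto
  then show ?thesis using tail2[of a] by (simp add: has_bochner_integral_iff)
qed

lemma hb_full0: "has_bochner_integral lborel (\<lambda>x. phi x) 1"
  using integrable_phi full0 by (simp add: has_bochner_integral_iff)
lemma hb_full1: "has_bochner_integral lborel (\<lambda>x. x * phi x) 0"
  using integrable_phi_pow[of 1] full1 by (simp add: has_bochner_integral_iff)
lemma hb_full2: "has_bochner_integral lborel (\<lambda>x. x\<^sup>2 * phi x) 1"
  using integrable_phi_pow[of 2] full2 by (simp add: has_bochner_integral_iff)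

definition pp :: "real \<Rightarrow> real \<Rightarrow> real" where
  "pp m c = Qt (c - m) + 1 - Qt (- c - m)"

definition rr :: "real \<Rightarrow> real \<Rightarrow> real" where
  "rr m c = (1 + c\<^sup>2) * pp m c - (c + m) * phi (c - m) - (c - m) * phi (c + m) + m\<^sup>2 * (1 - pp m c)"

lemma gauss01_prob: "prob_space gauss01"
  unfolding gauss01_def using prob_space_normal_density[of 1 0] by simp

lemma sets_gauss01[measurable_cong]: "sets gauss01 = sets borel"
  by (simp add: gauss01_def)

lemma space_gauss01: "space gauss01 = UNIV"
  by (simp add: gauss01_def)

lemma integral_gauss01:
  assumes [measurable]: "f \<in> borel_measurable borel"
  shows "integral\<^sup>L gauss01 f = (\<integral>x. phi x * f x \<partial>lborel)"
  unfolding gauss01_def by (subst integral_density) auto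

lemma soft_split:
  fixes b s c z :: real
  assumes s: "s > 0" and c: "c > 0"
  shows "(soft_thresh (b + s * z) (c * s) - b)\<^sup>2 =
     indicator {c - b/s..} z * (s\<^sup>2 * (z\<^sup>2 - 2 * c * z + c\<^sup>2))
   + (1 - indicator {- c - b/s..} z) * (s\<^sup>2 * (z\<^sup>2 + 2 * c * z + c\<^sup>2))
   + (indicator {- c - b/s..} z - indicator {c - b/s..} z) * b\<^sup>2"
proof -
  have e1: "z \<ge> c - b/s \<longleftrightarrow> b + s * z \<ge> c * s" using s by (simp add: field_simps)
  have e2: "z \<ge> - c - b/s \<longleftrightarrow> b + s * z \<ge> - (c * s)" using s by (simp add: field_simps)
  have cs: "c * s > 0" using s c by simp
  show ?thesis
  proof (cases "b + s * z \<ge> c * s")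
    case True
    then have "z \<ge> - c - b/s" using e1 e2 cs by linarith
    then show ?thesis using True e1 e2 cs
      by (simp add: soft_thresh_def power2_eq_square algebra_simps)
  next
    case False
    note F = this
    show ?thesis
    proof (cases "b + s * z \<ge> - (c * s)")
      case True
      then show ?thesis using F e1 e2 cs
        by (simp add: soft_thresh_def max_def abs_if)
    next
      case False
      then show ?thesis using F e1 e2 cs
        by (simp add: soft_thresh_def power2_eq_square algebra_simps)
    qed
  qed
qed

lemma inner_mse:
  fixes b s c :: real
  assumes s: "s > 0" and c: "c > 0"
  shows "(\<integral>z. (soft_thresh (b + s * z) (c * s) - b)\<^sup>2 \<partial>gauss01) = s\<^sup>2 * rr (b/s) c"
proof -
  define a where "a = c - b/s"
  define a' where "a' = - c - b/s"
  have hb: "has_bochner_integral lborel (\<lambda>z.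
      s\<^sup>2 * (indicator {a..} z * (z\<^sup>2 * phi z)) - (s\<^sup>2 * (2*c)) * (indicator {a..} z * (z * phi z))
      + (s\<^sup>2 * c\<^sup>2) * (indicator {a..} z * phi z)
      + s\<^sup>2 * (z\<^sup>2 * phi z) - s\<^sup>2 * (indicator {a'..} z * (z\<^sup>2 * phi z))
      + (s\<^sup>2 * (2*c)) * (z * phi z) - (s\<^sup>2 * (2*c)) * (indicator {a'..} z * (z * phi z))
      + (s\<^sup>2 * c\<^sup>2) * phi z - (s\<^sup>2 * c\<^sup>2) * (indicator {a'..} z * phi z)
      + b\<^sup>2 * (indicator {a'..} z * phi z) - b\<^sup>2 * (indicator {a..} z * phi z))
    (s\<^sup>2 * (Qt a + a * phi a) - (s\<^sup>2 * (2*c)) * phi a + (s\<^sup>2 * c\<^sup>2) * Qt a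
     + s\<^sup>2 * 1 - s\<^sup>2 * (Qt a' + a' * phi a')
     + (s\<^sup>2 * (2*c)) * 0 - (s\<^sup>2 * (2*c)) * phi a'
     + (s\<^sup>2 * c\<^sup>2) * 1 - (s\<^sup>2 * c\<^sup>2) * Qt a'
     + b\<^sup>2 * Qt a' - b\<^sup>2 * Qt a)"
    by (intro has_bochner_integral_add has_bochner_integral_diff has_bochner_integral_mult_right
          hb_tail0 hb_tail1 hb_tail2 hb_full0 hb_full1 hb_full2)
  have "(\<integral>z. (soft_thresh (b + s * z) (c * s) - b)\<^sup>2 \<partial>gauss01)
      = (\<integral>z. phi z * (soft_thresh (b + s * z) (c * s) - b)\<^sup>2 \<partial>lborel)"
    by (rule integral_gauss01) (simp add: soft_thresh_def)
  also have "\<dots> = (\<integral>z.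
      s\<^sup>2 * (indicator {a..} z * (z\<^sup>2 * phi z)) - (s\<^sup>2 * (2*c)) * (indicator {a..} z * (z * phi z))
      + (s\<^sup>2 * c\<^sup>2) * (indicator {a..} z * phi z)
      + s\<^sup>2 * (z\<^sup>2 * phi z) - s\<^sup>2 * (indicator {a'..} z * (z\<^sup>2 * phi z))
      + (s\<^sup>2 * (2*c)) * (z * phi z) - (s\<^sup>2 * (2*c)) * (indicator {a'..} z * (z * phi z))
      + (s\<^sup>2 * c\<^sup>2) * phi z - (s\<^sup>2 * c\<^sup>2) * (indicator {a'..} z * phi z)
      + b\<^sup>2 * (indicator {a'..} z * phi z) - b\<^sup>2 * (indicator {a..} z * phi z) \<partial>lborel)"
    apply (intro Bochner_Integration.integral_cong refl)
    apply (subst soft_split[OF s c])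
    apply (simp add: a_def[symmetric] a'_def[symmetric])
    apply (simp add: algebra_simps)
    done
  also have "\<dots> = (s\<^sup>2 * (Qt a + a * phi a) - (s\<^sup>2 * (2*c)) * phi a + (s\<^sup>2 * c\<^sup>2) * Qt a
     + s\<^sup>2 * 1 - s\<^sup>2 * (Qt a' + a' * phi a')
     + (s\<^sup>2 * (2*c)) * 0 - (s\<^sup>2 * (2*c)) * phi a'
     + (s\<^sup>2 * c\<^sup>2) * 1 - (s\<^sup>2 * c\<^sup>2) * Qt a'
     + b\<^sup>2 * Qt a' - b\<^sup>2 * Qt a)"
    using hb by (rule has_bochner_integral_integral_eq)
  also have "\<dots> = s\<^sup>2 * rr (b/s) c"
  proof -
    have pa': "phi a' = phi (c + b/s)" unfolding a'_def using phi_even[of "c + b/s"] by simp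
    have bb: "b = s * (b/s)" using s by simp
    show ?thesis
      unfolding rr_def pp_def pa' a_def
      using s by (simp add: a'_def field_simps power2_eq_square)
  qed
  finally show ?thesis .
qed

lemma inner_prob:
  fixes b s c :: real
  assumes s: "s > 0" and c: "c > 0"
  shows "(\<integral>z. indicator {z. c * s < \<bar>b + s * z\<bar>} z \<partial>gauss01) = pp (b/s) c"
proof -
  define a where "a = c - b/s"
  define a' where "a' = - c - b/s"
  have hb: "has_bochner_integral lborel (\<lambda>z. phi z - (indicator {a'..} z * phi z) + (indicator {a..} z * phi z))
     (1 - Qt a' + Qt a)"
    by (intro has_bochner_integral_add has_bochner_integral_diff hb_tail0 hb_full0)
  have e1: "z \<ge> c - b/s \<longleftrightarrow> b + s * z \<ge> c * s" for z using s by (simp add: field_simps)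
  have e2: "z \<ge> - c - b/s \<longleftrightarrow> b + s * z \<ge> - (c * s)" for z using s by (simp add: field_simps)
  have "(\<integral>z. indicator {z. c * s < \<bar>b + s * z\<bar>} z \<partial>gauss01)
      = (\<integral>z. phi z * indicator {z. c * s < \<bar>b + s * z\<bar>} z \<partial>lborel)"
    by (rule integral_gauss01) simp
  also have "\<dots> = (\<integral>z. phi z - (indicator {a'..} z * phi z) + (indicator {a..} z * phi z) \<partial>lborel)"
  proof (intro integral_cong_AE)
    show "AE z in lborel. phi z * indicator {z. c * s < \<bar>b + s * z\<bar>} z =
        phi z - indicator {a'..} z * phi z + indicator {a..} z * phi z"
      using AE_lborel_singleton[of a]
    proof eventually_elim
      case (elim z)
      have e1': "z > a \<longleftrightarrow> b + s * z > c * s" using s by (simp add: a_def field_simps)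
      have e2': "z \<ge> a' \<longleftrightarrow> b + s * z \<ge> - (c * s)" using s by (simp add: a'_def field_simps)
      have aa: "a' < a" using c by (simp add: a_def a'_def)
      show ?case
      proof (cases "z > a")
        case True then show ?thesis using e1' e2' aa by (auto simp: indicator_def)
      next
        case False
        then have za: "z < a" using elim by simp
        show ?thesis
        proof (cases "z \<ge> a'")
          case True then show ?thesis using za e1' e2' False by (auto simp: indicator_def abs_if)
        next
          case False then show ?thesis using za e1' e2' c s by (auto simp: indicator_def abs_if)
        qed
      qed
    qed
  qed simp_all
  also have "\<dots> = 1 - Qt a' + Qt a" using hb by (rule has_bochner_integral_integral_eq)
  also have "\<dots> = pp (b/s) c" unfolding pp_def a_def a'_def by simp
  finally show ?thesis .
qed


lemma soft_thresh_measurable[measurable]: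
  "(\<lambda>x. soft_thresh (f x) (g x)) \<in> borel_measurable M"
  if [measurable]: "f \<in> borel_measurable M" "g \<in> borel_measurable M"
  unfolding soft_thresh_def by measurable

lemma soft_dist: "0 \<le> t \<Longrightarrow> \<bar>soft_thresh y t - y\<bar> \<le> t"
  by (auto simp: soft_thresh_def max_def abs_if sgn_if)

lemma soft_bound:
  fixes b s c z :: real
  assumes "s > 0" "c > 0"
  shows "(soft_thresh (b + s * z) (c * s) - b)\<^sup>2 \<le> 2 * s\<^sup>2 * (c\<^sup>2 + z\<^sup>2)"
proof -
  have d: "\<bar>soft_thresh (b + s * z) (c * s) - (b + s * z)\<bar> \<le> c * s"
    using soft_dist[of "c * s" "b + s * z"] assms by simp
  have "\<bar>s * z\<bar> = s * \<bar>z\<bar>" using assms by (simp add: abs_mult)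
  with d have "\<bar>soft_thresh (b + s * z) (c * s) - b\<bar> \<le> s * (c + \<bar>z\<bar>)"
    by (simp add: algebra_simps)
  then have "(soft_thresh (b + s * z) (c * s) - b)\<^sup>2 \<le> (s * (c + \<bar>z\<bar>))\<^sup>2"
    by (metis abs_ge_zero order_trans power2_abs power_mono)
  also have "\<dots> = s\<^sup>2 * (c + \<bar>z\<bar>)\<^sup>2" by (simp add: power_mult_distrib)
  also have "\<dots> \<le> s\<^sup>2 * (2 * (c\<^sup>2 + z\<^sup>2))"
  proof (rule mult_left_mono)
    have "0 \<le> (c - \<bar>z\<bar>)\<^sup>2" by simp
    then show "(c + \<bar>z\<bar>)\<^sup>2 \<le> 2 * (c\<^sup>2 + z\<^sup>2)"
      by (simp add: power2_eq_square algebra_simps)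
  qed simp
  finally show ?thesis by (simp add: algebra_simps)
qed

lemma integrable_gauss01_sq: "integrable gauss01 (\<lambda>z. 2 * s\<^sup>2 * (c\<^sup>2 + z\<^sup>2))"
proof -
  have "integrable lborel (\<lambda>z. phi z * (2 * s\<^sup>2 * (c\<^sup>2 + z\<^sup>2)))"
  proof -
    have "integrable lborel (\<lambda>z. (2 * s\<^sup>2 * c\<^sup>2) * phi z + (2 * s\<^sup>2) * (z\<^sup>2 * phi z))"
      using integrable_phi integrable_phi_pow[of 2] by auto
    then show ?thesis by (simp add: algebra_simps)
  qed
  then show ?thesis unfolding gauss01_def
    by (subst integrable_density) auto
qed

context
  fixes P :: "real measure"
  assumes P_prob: "prob_space P" and P_sets[measurable_cong]: "sets P = sets borel"
begin

interpretation P: prob_space P by (rule P_prob)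
interpretation G: prob_space gauss01 by (rule gauss01_prob)
interpretation PG: pair_prob_space P gauss01 by unfold_locales

lemma mse_eq:
  assumes s: "s > 0" and c: "c > 0"
  shows "lasso_mse P c s = (\<integral>b. s\<^sup>2 * rr (b/s) c \<partial>P)"
proof -
  let ?f = "\<lambda>bz. (soft_thresh (fst bz + s * snd bz) (c * s) - fst bz)\<^sup>2"
  have meas: "?f \<in> borel_measurable (P \<Otimes>\<^sub>M gauss01)" by measurable
  have inner: "(\<integral>z. ?f (b, z) \<partial>gauss01) = s\<^sup>2 * rr (b/s) c" for b
    using inner_mse[OF s c, of b] by simp
  have int2: "integrable gauss01 (\<lambda>z. ?f (b, z))" for b
    by (rule Bochner_Integration.integrable_bound[OF integrable_gauss01_sq[of s c]])
       (use soft_bound[OF s c] in \<open>auto\<close>)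
  have int1: "integrable P (\<lambda>b. \<integral>z. norm (?f (b, z)) \<partial>gauss01)"
  proof (rule Bochner_Integration.integrable_bound[where f="\<lambda>_. \<integral>z. 2 * s\<^sup>2 * (c\<^sup>2 + z\<^sup>2) \<partial>gauss01"])
    show "(\<lambda>b. \<integral>z. norm (?f (b, z)) \<partial>gauss01) \<in> borel_measurable P" by measurable
    show "AE b in P. norm (\<integral>z. norm (?f (b, z)) \<partial>gauss01) \<le> norm (\<integral>z. 2 * s\<^sup>2 * (c\<^sup>2 + z\<^sup>2) \<partial>gauss01)"
    proof (intro AE_I2)
      fix b
      have "(\<integral>z. norm (?f (b, z)) \<partial>gauss01) \<le> (\<integral>z. 2 * s\<^sup>2 * (c\<^sup>2 + z\<^sup>2) \<partial>gauss01)"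
        using soft_bound[OF s c] int2 integrable_gauss01_sq
        by (intro integral_mono) auto
      moreover have "0 \<le> (\<integral>z. norm (?f (b, z)) \<partial>gauss01)" by (intro integral_nonneg_AE) auto
      ultimately show "norm (\<integral>z. norm (?f (b, z)) \<partial>gauss01) \<le> norm (\<integral>z. 2 * s\<^sup>2 * (c\<^sup>2 + z\<^sup>2) \<partial>gauss01)"
        by simp
    qed
  qed simp
  have intf: "integrable (P \<Otimes>\<^sub>M gauss01) ?f"
    by (rule PG.Fubini_integrable[OF meas]) (use int1 int2 in auto)
  have "lasso_mse P c s = integral\<^sup>L (P \<Otimes>\<^sub>M gauss01) ?f"
    unfolding lasso_mse_def BZ_law_def by simp
  also have "\<dots> = (\<integral>b. (\<integral>z. ?f (b, z) \<partial>gauss01) \<partial>P)"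
    using PG.integral_fst'[OF intf] by simp
  also have "\<dots> = (\<integral>b. s\<^sup>2 * rr (b/s) c \<partial>P)" using inner by simp
  finally show ?thesis .
qed

lemma prob_eq:
  assumes s: "s > 0" and c: "c > 0"
  shows "lasso_prob P c s = (\<integral>b. pp (b/s) c \<partial>P)"
proof -
  define A where "A = {bz \<in> space (P \<Otimes>\<^sub>M gauss01). c * s < \<bar>fst bz + s * snd bz\<bar>}"
  have A[measurable]: "A \<in> sets (P \<Otimes>\<^sub>M gauss01)" unfolding A_def by measurable
  have intA: "integrable (P \<Otimes>\<^sub>M gauss01) (indicator A :: _ \<Rightarrow> real)"
    using A by (simp add: integrable_indicator_iff Int_absorb2 sets.sets_into_space PG.P.emeasure_finite less_top[symmetric])
  have "lasso_prob P c s = measure (P \<Otimes>\<^sub>M gauss01) A"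
    unfolding lasso_prob_def BZ_law_def A_def by simp
  also have "\<dots> = integral\<^sup>L (P \<Otimes>\<^sub>M gauss01) (indicator A)"
    using A by (simp add: Int_absorb2 sets.sets_into_space)
  also have "\<dots> = (\<integral>b. (\<integral>z. indicator A (b, z) \<partial>gauss01) \<partial>P)"
    using PG.integral_fst'[OF intA] by simp
  also have "\<dots> = (\<integral>b. pp (b/s) c \<partial>P)"
  proof (intro Bochner_Integration.integral_cong refl)
    fix b
    have "(\<integral>z. (indicator A (b, z) :: real) \<partial>gauss01) = (\<integral>z. indicator {z. c * s < \<bar>b + s * z\<bar>} z \<partial>gauss01)"
      by (intro Bochner_Integration.integral_cong refl)
         (auto simp: A_def space_pair_measure space_gauss01 indicator_def P_sets[THEN sets_eq_imp_space_eq])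
    then show "(\<integral>z. indicator A (b, z) \<partial>gauss01) = pp (b/s) c"
      using inner_prob[OF s c, of b] by (simp only:)
  qed
  finally show ?thesis .
qed

end


lemma mvt_bound:
  fixes g g' :: "real \<Rightarrow> real"
  assumes der: "\<And>t. x1 < t \<Longrightarrow> t < x2 \<Longrightarrow> (g has_real_derivative g' t) (at t)"
    and bnd: "\<And>t. x1 < t \<Longrightarrow> t < x2 \<Longrightarrow> \<bar>g' t\<bar> \<le> W"
    and x: "x1 < x" "x < x2" and y: "x1 < y" "y < x2"
  shows "\<bar>g y - g x\<bar> \<le> W * \<bar>y - x\<bar>"
proof -
  have main: "\<bar>g v - g u\<bar> \<le> W * \<bar>v - u\<bar>" if uv: "x1 < u" "u < v" "v < x2" for u v
  proof -
    have "\<exists>z. u < z \<and> z < v \<and> g v - g u = (v - u) * g' z"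
      using MVT2[of u v g g'] der uv by force
    then obtain z where z: "u < z" "z < v" "g v - g u = (v - u) * g' z" by blast
    have "\<bar>g' z\<bar> \<le> W" using bnd z uv by simp
    then show ?thesis using z uv by (simp add: abs_mult mult.commute mult_right_mono)
  qed
  show ?thesis
  proof (cases x y rule: linorder_cases)
    case less then show ?thesis using main x y by simp
  next
    case equal then show ?thesis using bnd[of x] x by simp
  next
    case greater then show ?thesis using main[of y x] x y by (simp add: abs_minus_commute)
  qed
qed

lemma deriv_integral:
  fixes f f' :: "real \<Rightarrow> 'b \<Rightarrow> real" and w :: "'b \<Rightarrow> real"
  assumes x0: "x1 < x0" "x0 < x2"
    and der: "\<And>x b. x1 < x \<Longrightarrow> x < x2 \<Longrightarrow> b \<in> space M \<Longrightarrow> ((\<lambda>x. f x b) has_real_derivative f' x b) (at x)"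
    and bnd: "\<And>x b. x1 < x \<Longrightarrow> x < x2 \<Longrightarrow> b \<in> space M \<Longrightarrow> \<bar>f' x b\<bar> \<le> w b"
    and w: "integrable M w"
    and int0: "integrable M (f x0)"
    and meas: "\<And>x. x1 < x \<Longrightarrow> x < x2 \<Longrightarrow> f x \<in> borel_measurable M"
    and meas': "f' x0 \<in> borel_measurable M"
  shows "((\<lambda>x. \<integral>b. f x b \<partial>M) has_real_derivative (\<integral>b. f' x0 b \<partial>M)) (at x0)"
proof -
  have intx: "integrable M (f x)" if "x1 < x" "x < x2" for x
  proof -
    have "integrable M (\<lambda>b. \<bar>f x0 b\<bar> + w b * \<bar>x - x0\<bar>)"
      using int0 w by auto
    then show ?thesis
    proof (rule Bochner_Integration.integrable_bound)
      show "f x \<in> borel_measurable M" using meas that .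
      show "AE b in M. norm (f x b) \<le> norm (\<bar>f x0 b\<bar> + w b * \<bar>x - x0\<bar>)"
      proof (intro AE_I2)
        fix b assume b: "b \<in> space M"
        have "\<bar>f x b - f x0 b\<bar> \<le> w b * \<bar>x - x0\<bar>"
          by (rule mvt_bound[where g="\<lambda>x. f x b" and g'="\<lambda>x. f' x b"])
             (use der bnd b x0 that in auto)
        moreover have "0 \<le> w b" using bnd[OF x0 b] by linarith
        ultimately show "norm (f x b) \<le> norm (\<bar>f x0 b\<bar> + w b * \<bar>x - x0\<bar>)"
          by simp
      qed
    qed
  qed
  show ?thesis
    unfolding has_field_derivative_iff tendsto_at_iff_sequentially
  proof (intro allI impI)
    fix X :: "nat \<Rightarrow> real"
    assume Xne: "\<forall>i. X i \<in> UNIV - {x0}" and Xl: "X \<longlonglongrightarrow> x0"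
    have "\<forall>\<^sub>F n in sequentially. X n \<in> {x1<..<x2}"
      using Xl x0 by (intro topological_tendstoD) auto
    then obtain N where N: "\<And>n. n \<ge> N \<Longrightarrow> X n \<in> {x1<..<x2}"
      by (auto simp: eventually_sequentially)
    define Y where "Y n = X (n + N)" for n
    have Yin: "x1 < Y n" "Y n < x2" for n using N[of "n + N"] by (auto simp: Y_def)
    have Yne: "Y n \<noteq> x0" for n using Xne by (auto simp: Y_def)
    have Yl: "Y \<longlonglongrightarrow> x0" unfolding Y_def by (rule LIMSEQ_ignore_initial_segment[OF Xl])
    define q where "q n b = (f (Y n) b - f x0 b) / (Y n - x0)" for n b
    have lim: "(\<lambda>n. \<integral>b. q n b \<partial>M) \<longlonglongrightarrow> (\<integral>b. f' x0 b \<partial>M)"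
    proof (rule integral_dominated_convergence[where w=w])
      show "f' x0 \<in> borel_measurable M" by (rule meas')
      show "q n \<in> borel_measurable M" for n
        unfolding q_def using meas[OF Yin] meas[OF x0] by measurable
      show "integrable M w" by (rule w)
      show "AE b in M. (\<lambda>n. q n b) \<longlonglongrightarrow> f' x0 b"
      proof (intro AE_I2)
        fix b assume b: "b \<in> space M"
        have "((\<lambda>y. (f y b - f x0 b) / (y - x0)) \<longlongrightarrow> f' x0 b) (at x0)"
          using der[OF x0 b] unfolding has_field_derivative_iff .
        then show "(\<lambda>n. q n b) \<longlonglongrightarrow> f' x0 b"
          unfolding tendsto_at_iff_sequentially q_def comp_def using Yne Yl by auto
      qed
      show "AE b in M. norm (q n b) \<le> w b" for n
      proof (intro AE_I2)
        fix b assume b: "b \<in> space M"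
        have "\<bar>f (Y n) b - f x0 b\<bar> \<le> w b * \<bar>Y n - x0\<bar>"
          by (rule mvt_bound[where g="\<lambda>x. f x b" and g'="\<lambda>x. f' x b"])
             (use der bnd b x0 Yin in auto)
        moreover have "\<bar>Y n - x0\<bar> > 0" using Yne by simp
        ultimately show "norm (q n b) \<le> w b"
          by (simp add: q_def abs_divide divide_le_eq)
      qed
    qed
    have eq: "(\<integral>b. q n b \<partial>M) = ((\<lambda>x. \<integral>b. f x b \<partial>M) (Y n) - (\<integral>b. f x0 b \<partial>M)) / (Y n - x0)" for n
      unfolding q_def using intx[OF Yin] int0
      by (simp add: Bochner_Integration.integral_diff)
    have "(\<lambda>n. ((\<lambda>x. \<integral>b. f x b \<partial>M) (X (n + N)) - (\<integral>b. f x0 b \<partial>M)) / (X (n + N) - x0)) \<longlonglongrightarrow> (\<integral>b. f' x0 b \<partial>M)"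
      using lim unfolding eq Y_def .
    then show "((\<lambda>y. ((\<lambda>x. \<integral>b. f x b \<partial>M) y - (\<integral>b. f x0 b \<partial>M)) / (y - x0)) \<circ> X) \<longlonglongrightarrow> (\<integral>b. f' x0 b \<partial>M)"
      unfolding comp_def by (rule LIMSEQ_offset)
  qed
qed

lemma deriv_integral_integrable:
  fixes f f' :: "real \<Rightarrow> 'b \<Rightarrow> real" and w :: "'b \<Rightarrow> real"
  assumes x0: "x1 < x0" "x0 < x2" and x: "x1 < x" "x < x2"
    and der: "\<And>x b. x1 < x \<Longrightarrow> x < x2 \<Longrightarrow> b \<in> space M \<Longrightarrow> ((\<lambda>x. f x b) has_real_derivative f' x b) (at x)"
    and bnd: "\<And>x b. x1 < x \<Longrightarrow> x < x2 \<Longrightarrow> b \<in> space M \<Longrightarrow> \<bar>f' x b\<bar> \<le> w b"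
    and w: "integrable M w"
    and int0: "integrable M (f x0)"
    and meas: "f x \<in> borel_measurable M"
  shows "integrable M (f x)"
proof -
  have "integrable M (\<lambda>b. \<bar>f x0 b\<bar> + w b * \<bar>x - x0\<bar>)"
    using int0 w by auto
  then show ?thesis
  proof (rule Bochner_Integration.integrable_bound)
    show "f x \<in> borel_measurable M" using meas .
    show "AE b in M. norm (f x b) \<le> norm (\<bar>f x0 b\<bar> + w b * \<bar>x - x0\<bar>)"
    proof (intro AE_I2)
      fix b assume b: "b \<in> space M"
      have "\<bar>f x b - f x0 b\<bar> \<le> w b * \<bar>x - x0\<bar>"
        by (rule mvt_bound[where g="\<lambda>x. f x b" and g'="\<lambda>x. f' x b"])
           (use der bnd b x0 x in auto)
      moreover have "0 \<le> w b" using bnd[OF x0 b] by linarith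
      ultimately show "norm (f x b) \<le> norm (\<bar>f x0 b\<bar> + w b * \<bar>x - x0\<bar>)"
        by simp
    qed
  qed
qed

lemma cont_integral:
  fixes g :: "'p::metric_space \<Rightarrow> 'b \<Rightarrow> real" and w :: "'b \<Rightarrow> real"
  assumes S: "open S" "p0 \<in> S"
    and cont: "\<And>b. b \<in> space M \<Longrightarrow> continuous (at p0) (\<lambda>p. g p b)"
    and meas: "\<And>p. p \<in> S \<Longrightarrow> g p \<in> borel_measurable M"
    and bnd: "\<And>p b. p \<in> S \<Longrightarrow> b \<in> space M \<Longrightarrow> \<bar>g p b\<bar> \<le> w b"
    and w: "integrable M w"
  shows "continuous (at p0) (\<lambda>p. \<integral>b. g p b \<partial>M)"
  unfolding continuous_at_sequentially
proof (intro allI impI)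
  fix X :: "nat \<Rightarrow> 'p" assume Xl: "X \<longlonglongrightarrow> p0"
  have "\<forall>\<^sub>F n in sequentially. X n \<in> S"
    using Xl S by (intro topological_tendstoD) auto
  then obtain N where N: "\<And>n. n \<ge> N \<Longrightarrow> X n \<in> S"
    by (auto simp: eventually_sequentially)
  have "(\<lambda>n. \<integral>b. g (X (n + N)) b \<partial>M) \<longlonglongrightarrow> (\<integral>b. g p0 b \<partial>M)"
  proof (rule integral_dominated_convergence[where w=w])
    show "g p0 \<in> borel_measurable M" using meas S by simp
    show "g (X (n + N)) \<in> borel_measurable M" for n using meas N by simp
    show "integrable M w" by (rule w)
    show "AE b in M. (\<lambda>n. g (X (n + N)) b) \<longlonglongrightarrow> g p0 b"
    proof (intro AE_I2)
      fix b assume b: "b \<in> space M"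
      have "(\<lambda>n. g (X n) b) \<longlonglongrightarrow> g p0 b"
        using cont[OF b] Xl unfolding continuous_at_sequentially comp_def by blast
      then show "(\<lambda>n. g (X (n + N)) b) \<longlonglongrightarrow> g p0 b"
        by (rule LIMSEQ_ignore_initial_segment)
    qed
    show "AE b in M. norm (g (X (n + N)) b) \<le> w b" for n
      using bnd N by (intro AE_I2) auto
  qed
  then show "((\<lambda>p. \<integral>b. g p b \<partial>M) \<circ> X) \<longlonglongrightarrow> (\<integral>b. g p0 b \<partial>M)"
    unfolding comp_def by (rule LIMSEQ_offset)
qed


lemma Qt_measurable[measurable]: "Qt \<in> borel_measurable borel"
  by (intro borel_measurable_continuous_onI continuous_at_imp_continuous_on ballI Qt_cont)

lemma phi_measurable': "phi \<in> borel_measurable borel" by simp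

lemma Qt_cont'[continuous_intros]: "continuous F f \<Longrightarrow> continuous F (\<lambda>x. Qt (f x))"
  unfolding continuous_def by (rule isCont_tendsto_compose[OF Qt_cont])

lemma phi_cont'[continuous_intros]: "continuous F f \<Longrightarrow> continuous F (\<lambda>x. phi (f x))"
  unfolding continuous_def by (rule isCont_tendsto_compose[OF phi_cont])

lemma Qt_le1: "Qt a \<le> 1"
proof -
  have "Qt a \<le> (\<integral>x. phi x \<partial>lborel)"
    unfolding Qt_def using hb_tail0[of a] integrable_phi
    by (intro integral_mono) (auto simp: has_bochner_integral_iff split: split_indicator)
  then show ?thesis by simp
qed

lemma Qt_deriv_chain[derivative_intros]:
  "(f has_real_derivative d) (at x within S) \<Longrightarrow> ((\<lambda>x. Qt (f x)) has_real_derivative (- phi (f x) * d)) (at x within S)"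
  by (rule DERIV_chain2[OF Qt_deriv])

lemma phi_deriv_chain[derivative_intros]:
  "(f has_real_derivative d) (at x within S) \<Longrightarrow> ((\<lambda>x. phi (f x)) has_real_derivative (- f x * phi (f x) * d)) (at x within S)"
  by (rule DERIV_chain2[OF phi_deriv])

definition qq :: "real \<Rightarrow> real \<Rightarrow> real" where
  "qq m c = phi (c - m) + phi (c + m)"

lemma pp_dc: "((\<lambda>c. pp m c) has_real_derivative (- qq m c)) (at c)"
  unfolding pp_def qq_def
  by (auto intro!: derivative_eq_intros simp: phi_even[of "c + m", symmetric])

lemma pp_dm: "((\<lambda>m. pp m c) has_real_derivative (phi (c - m) - phi (c + m))) (at m)"
  unfolding pp_def
  by (auto intro!: derivative_eq_intros simp: phi_even[of "c + m", symmetric])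

lemma rr_dc: "((\<lambda>c. rr m c) has_real_derivative (2 * c * pp m c - 2 * qq m c)) (at c)"
proof -
  have pe: "phi (- c - m) = phi (c + m)" using phi_even[of "c + m"] by simp
  show ?thesis
    unfolding rr_def pp_def qq_def
    by (auto intro!: derivative_eq_intros simp: pe) (simp add: algebra_simps power2_eq_square)
qed

lemma rr_dm: "((\<lambda>m. rr m c) has_real_derivative (2 * m * (1 - pp m c))) (at m)"
proof -
  have pe: "phi (- c - m) = phi (c + m)" using phi_even[of "c + m"] by simp
  show ?thesis
    unfolding rr_def pp_def qq_def
    by (auto intro!: derivative_eq_intros simp: pe) (simp add: algebra_simps power2_eq_square)
qed

lemma pp_bounds: "0 \<le> pp m c" "pp m c \<le> 2"
  unfolding pp_def using Qt_nonneg[of "c - m"] Qt_le1[of "c - m"] Qt_nonneg[of "- c - m"] Qt_le1[of "- c - m"]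
  by linarith+

lemma qq_bounds: "0 \<le> qq m c" "qq m c \<le> 2"
  unfolding qq_def using phi_pos[of "c - m"] phi_le1[of "c - m"] phi_pos[of "c + m"] phi_le1[of "c + m"]
  by linarith+

lemma abs_le_sq: "\<bar>m::real\<bar> \<le> 1 + m\<^sup>2"
proof -
  have "0 \<le> (\<bar>m\<bar> - 1)\<^sup>2" by simp
  then have "2 * \<bar>m\<bar> \<le> 1 + m\<^sup>2" by (simp add: power2_eq_square algebra_simps)
  then show ?thesis by simp
qed

lemma rr_bound:
  assumes c: "0 \<le> c"
  shows "\<bar>rr m c\<bar> \<le> (2 * c\<^sup>2 + 2 * c + 7) * (1 + m\<^sup>2)"
proof -
  have p: "0 \<le> pp m c" "pp m c \<le> 2" by (rule pp_bounds)+
  have f1: "0 < phi (c - m)" "phi (c - m) \<le> 1" by (rule phi_pos phi_le1)+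
  have f2: "0 < phi (c + m)" "phi (c + m) \<le> 1" by (rule phi_pos phi_le1)+
  have a1: "\<bar>(1 + c\<^sup>2) * pp m c\<bar> \<le> 2 * (1 + c\<^sup>2)"
  proof -
    have "(1 + c\<^sup>2) * pp m c \<le> (1 + c\<^sup>2) * 2" using p by (intro mult_left_mono) auto
    moreover have "0 \<le> (1 + c\<^sup>2) * pp m c" using p by simp
    ultimately show ?thesis by (simp add: algebra_simps)
  qed
  have a2: "\<bar>(c + m) * phi (c - m)\<bar> \<le> c + \<bar>m\<bar>"
  proof -
    have "\<bar>(c + m) * phi (c - m)\<bar> = \<bar>c + m\<bar> * phi (c - m)" using f1 by (simp add: abs_mult)
    also have "\<dots> \<le> \<bar>c + m\<bar> * 1" using f1 by (intro mult_left_mono) auto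
    finally show ?thesis using c by simp
  qed
  have a3: "\<bar>(c - m) * phi (c + m)\<bar> \<le> c + \<bar>m\<bar>"
  proof -
    have "\<bar>(c - m) * phi (c + m)\<bar> = \<bar>c - m\<bar> * phi (c + m)" using f2 by (simp add: abs_mult)
    also have "\<dots> \<le> \<bar>c - m\<bar> * 1" using f2 by (intro mult_left_mono) auto
    finally show ?thesis using c by simp
  qed
  have a4: "\<bar>m\<^sup>2 * (1 - pp m c)\<bar> \<le> m\<^sup>2"
  proof -
    have "\<bar>1 - pp m c\<bar> \<le> 1" using p by simp
    then show ?thesis by (simp add: abs_mult) (intro mult_left_le; simp)
  qed
  have "\<bar>rr m c\<bar> \<le> 2 * (1 + c\<^sup>2) + 2 * c + 2 * \<bar>m\<bar> + m\<^sup>2"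
    unfolding rr_def using a1 a2 a3 a4 by linarith
  also have "\<dots> \<le> (2 * c\<^sup>2 + 2 * c + 7) * (1 + m\<^sup>2)"
  proof -
    have "\<bar>m\<bar> \<le> 1 + m\<^sup>2" by (rule abs_le_sq)
    moreover have "0 \<le> m\<^sup>2" by simp
    moreover have "0 \<le> (2 * c\<^sup>2 + 2 * c) * m\<^sup>2" using c by simp
    ultimately show ?thesis
      apply (simp add: algebra_simps)
      using zero_le_power2[of m] by linarith
  qed
  finally show ?thesis .
qed


lemma rr_dm_chain[derivative_intros]:
  "(f has_real_derivative d) (at x within S) \<Longrightarrow>
   ((\<lambda>x. rr (f x) c) has_real_derivative (2 * f x * (1 - pp (f x) c) * d)) (at x within S)"
  by (rule DERIV_chain2[OF rr_dm])

lemma pp_dm_chain[derivative_intros]: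
  "(f has_real_derivative d) (at x within S) \<Longrightarrow>
   ((\<lambda>x. pp (f x) c) has_real_derivative ((phi (c - f x) - phi (c + f x)) * d)) (at x within S)"
  by (rule DERIV_chain2[OF pp_dm])

definition "fm c s b = s\<^sup>2 * rr (b/s) c"
definition "fp c s b = pp (b/s) c"
definition "dmc c s b = s\<^sup>2 * (2 * c * pp (b/s) c - 2 * qq (b/s) c)"
definition "dms c s b = 2 * s * rr (b/s) c - 2 * s * (b/s)\<^sup>2 * (1 - pp (b/s) c)"
definition "dpc c s b = - qq (b/s) c"
definition "dps c s b = - (1/s) * (b/s) * (phi (c - b/s) - phi (c + b/s))"

lemma fm_dc: "((\<lambda>c. fm c s b) has_real_derivative dmc c s b) (at c)"
  unfolding fm_def dmc_def
  using DERIV_cmult[OF rr_dc, of "s\<^sup>2" "b/s" c] by simp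

lemma fp_dc: "((\<lambda>c. fp c s b) has_real_derivative dpc c s b) (at c)"
  unfolding fp_def dpc_def using pp_dc .

lemma fm_ds: assumes "s \<noteq> 0" shows "((\<lambda>s. fm c s b) has_real_derivative dms c s b) (at s)"
  unfolding fm_def dms_def using assms
  by (auto intro!: derivative_eq_intros simp: field_simps power2_eq_square)

lemma fp_ds: assumes "s \<noteq> 0" shows "((\<lambda>s. fp c s b) has_real_derivative dps c s b) (at s)"
  unfolding fp_def dps_def using assms
  by (auto intro!: derivative_eq_intros simp: field_simps power2_eq_square)

lemma mu_sq_le: fixes b s s1 :: real assumes "0 < s1" "s1 \<le> s" shows "(b/s)\<^sup>2 \<le> (b/s1)\<^sup>2"
proof -
  have "\<bar>b/s\<bar> \<le> \<bar>b/s1\<bar>" using assms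
    by (simp add: abs_divide divide_left_mono)
  then show ?thesis by (metis abs_ge_zero power2_abs power_mono)
qed

context
  fixes s1 S C :: real
  assumes s1: "0 < s1" and C: "0 \<le> C"
begin

definition "wgt b = 1 + (b/s1)\<^sup>2"

lemma wgt_pos: "1 \<le> wgt b" unfolding wgt_def by simp

lemma rr_wbound: assumes "0 \<le> c" "c \<le> C" "s1 \<le> s"
  shows "\<bar>rr (b/s) c\<bar> \<le> (2 * C\<^sup>2 + 2 * C + 7) * wgt b"
proof -
  have "\<bar>rr (b/s) c\<bar> \<le> (2 * c\<^sup>2 + 2 * c + 7) * (1 + (b/s)\<^sup>2)" using rr_bound assms by simp
  also have "\<dots> \<le> (2 * C\<^sup>2 + 2 * C + 7) * wgt b"
  proof -
    have "c\<^sup>2 \<le> C\<^sup>2" using assms by (intro power_mono) auto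
    then show ?thesis
      unfolding wgt_def using assms mu_sq_le[OF s1 \<open>s1 \<le> s\<close>, of b]
      by (intro mult_mono add_mono) auto
  qed
  finally show ?thesis .
qed

lemma fm_bound: assumes "0 \<le> c" "c \<le> C" "s1 \<le> s" "s \<le> S"
  shows "\<bar>fm c s b\<bar> \<le> S\<^sup>2 * (2 * C\<^sup>2 + 2 * C + 7) * wgt b"
proof -
  have "\<bar>fm c s b\<bar> = s\<^sup>2 * \<bar>rr (b/s) c\<bar>" by (simp add: fm_def abs_mult)
  also have "\<dots> \<le> S\<^sup>2 * ((2 * C\<^sup>2 + 2 * C + 7) * wgt b)"
    using assms s1 rr_wbound[OF assms(1-3), of b] by (intro mult_mono power_mono) auto
  finally show ?thesis by simp
qed

lemma fp_bound: "\<bar>fp c s b\<bar> \<le> 2 * wgt b"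
  using pp_bounds[of "b/s" c] wgt_pos[of b] by (simp add: fp_def)

lemma dmc_bound: assumes "0 \<le> c" "c \<le> C" "s1 \<le> s" "s \<le> S"
  shows "\<bar>dmc c s b\<bar> \<le> S\<^sup>2 * (4 * C + 4) * wgt b"
proof -
  have p: "0 \<le> pp (b/s) c" "pp (b/s) c \<le> 2" by (rule pp_bounds)+
  have q: "0 \<le> qq (b/s) c" "qq (b/s) c \<le> 2" by (rule qq_bounds)+
  have cp: "c * pp (b/s) c \<le> C * 2" using p assms by (intro mult_mono) auto
  have "\<bar>2 * c * pp (b/s) c - 2 * qq (b/s) c\<bar> \<le> 4 * C + 4"
  proof -
    have "0 \<le> c * pp (b/s) c" using p assms by simp
    then show ?thesis using p q cp assms by (simp only: abs_le_iff) linarith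
  qed
  also have "\<dots> \<le> (4 * C + 4) * wgt b" using wgt_pos[of b] C by simp
  finally have "\<bar>2 * c * pp (b/s) c - 2 * qq (b/s) c\<bar> \<le> (4 * C + 4) * wgt b" .
  then have "s\<^sup>2 * \<bar>2 * c * pp (b/s) c - 2 * qq (b/s) c\<bar> \<le> S\<^sup>2 * ((4 * C + 4) * wgt b)"
    using assms s1 by (intro mult_mono power_mono) auto
  then show ?thesis by (simp add: dmc_def abs_mult)
qed

lemma dms_bound: assumes "0 \<le> c" "c \<le> C" "s1 \<le> s" "s \<le> S"
  shows "\<bar>dms c s b\<bar> \<le> 2 * S * (2 * C\<^sup>2 + 2 * C + 8) * wgt b"
proof -
  have p: "0 \<le> pp (b/s) c" "pp (b/s) c \<le> 2" by (rule pp_bounds)+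
  have sp: "0 < s" using s1 assms by simp
  have r: "\<bar>rr (b/s) c\<bar> \<le> (2 * C\<^sup>2 + 2 * C + 7) * wgt b" by (rule rr_wbound[OF assms(1-3)])
  have m: "\<bar>(b/s)\<^sup>2 * (1 - pp (b/s) c)\<bar> \<le> wgt b"
  proof -
    have "\<bar>(b/s)\<^sup>2 * (1 - pp (b/s) c)\<bar> = (b/s)\<^sup>2 * \<bar>1 - pp (b/s) c\<bar>" by (simp add: abs_mult)
    also have "\<dots> \<le> (b/s)\<^sup>2 * 1" using p by (intro mult_left_mono) auto
    also have "\<dots> \<le> wgt b" using mu_sq_le[OF s1 assms(3), of b] by (simp add: wgt_def)
    finally show ?thesis .
  qed
  have "\<bar>dms c s b\<bar> \<le> 2 * s * \<bar>rr (b/s) c\<bar> + 2 * s * \<bar>(b/s)\<^sup>2 * (1 - pp (b/s) c)\<bar>"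
  proof -
    have "\<bar>dms c s b\<bar> \<le> \<bar>2 * s * rr (b/s) c\<bar> + \<bar>2 * s * ((b/s)\<^sup>2 * (1 - pp (b/s) c))\<bar>"
      unfolding dms_def using abs_triangle_ineq4[of "2 * s * rr (b/s) c" "2 * s * ((b/s)\<^sup>2 * (1 - pp (b/s) c))"]
      by (simp only: mult.assoc)
    also have "\<dots> = 2 * s * \<bar>rr (b/s) c\<bar> + 2 * s * \<bar>(b/s)\<^sup>2 * (1 - pp (b/s) c)\<bar>"
      using sp by (simp add: abs_mult)
    finally show ?thesis .
  qed
  also have "\<dots> \<le> 2 * S * ((2 * C\<^sup>2 + 2 * C + 7) * wgt b) + 2 * S * wgt b"
    using r m sp assms by (intro add_mono mult_mono) auto
  also have "\<dots> = 2 * S * (2 * C\<^sup>2 + 2 * C + 8) * wgt b" by (simp add: algebra_simps)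
  finally show ?thesis .
qed

lemma dpc_bound: "\<bar>dpc c s b\<bar> \<le> 2 * wgt b"
  using qq_bounds[of "b/s" c] wgt_pos[of b] by (simp add: dpc_def)

lemma dps_bound: assumes "s1 \<le> s"
  shows "\<bar>dps c s b\<bar> \<le> (1/s1) * wgt b"
proof -
  have sp: "0 < s" using s1 assms by simp
  have d: "\<bar>phi (c - b/s) - phi (c + b/s)\<bar> \<le> 1"
    using phi_pos[of "c - b/s"] phi_le1[of "c - b/s"] phi_pos[of "c + b/s"] phi_le1[of "c + b/s"] by simp
  have "\<bar>dps c s b\<bar> = (1/s) * (\<bar>b/s\<bar> * \<bar>phi (c - b/s) - phi (c + b/s)\<bar>)"
    using sp by (simp add: dps_def abs_mult)
  also have "\<dots> \<le> (1/s1) * ((1 + (b/s)\<^sup>2) * 1)"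
    using d sp s1 assms abs_le_sq[of "b/s"]
    by (intro mult_mono frac_le) auto
  also have "\<dots> \<le> (1/s1) * wgt b"
    using mu_sq_le[OF s1 assms, of b] s1 by (intro mult_left_mono) (auto simp: wgt_def)
  finally show ?thesis .
qed

end

lemma meas_fm[measurable]: "fm c s \<in> borel_measurable borel" unfolding fm_def rr_def pp_def by measurable
lemma meas_fp[measurable]: "fp c s \<in> borel_measurable borel" unfolding fp_def pp_def by measurable
lemma meas_dmc[measurable]: "dmc c s \<in> borel_measurable borel" unfolding dmc_def qq_def pp_def by measurable
lemma meas_dms[measurable]: "dms c s \<in> borel_measurable borel" unfolding dms_def rr_def pp_def by measurable
lemma meas_dpc[measurable]: "dpc c s \<in> borel_measurable borel" unfolding dpc_def qq_def by measurable
lemma meas_dps[measurable]: "dps c s \<in> borel_measurable borel" unfolding dps_def by measurable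

lemma cont_dms: assumes "s \<noteq> 0" shows "continuous (at (c, s)) (\<lambda>p. dms (fst p) (snd p) b)"
  unfolding dms_def rr_def pp_def using assms by (intro continuous_intros) auto

lemma cont_dps: assumes "s \<noteq> 0" shows "continuous (at (c, s)) (\<lambda>p. dps (fst p) (snd p) b)"
  unfolding dps_def using assms by (intro continuous_intros) auto


context
  fixes P :: "real measure"
  assumes P_prob: "prob_space P" and P_sets[measurable_cong]: "sets P = sets borel"
    and P_moment: "integrable P (\<lambda>b. b\<^sup>2)"
begin

interpretation P: prob_space P by (rule P_prob)

lemma space_P: "space P = UNIV"
  using P_sets[THEN sets_eq_imp_space_eq] by simp

lemma int_wgt: assumes "0 < s1" shows "integrable P (wgt s1)"
proof -
  have "integrable P (\<lambda>b. 1 + (1/s1\<^sup>2) * b\<^sup>2)" using P_moment by auto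
  moreover have "wgt s1 = (\<lambda>b. 1 + (1/s1\<^sup>2) * b\<^sup>2)"
    using wgt_def[OF assms, of 0] by (auto simp: power_divide)
  ultimately show ?thesis by simp
qed

lemma int_bounded:
  assumes "0 < s1" "f \<in> borel_measurable borel" "\<And>b. \<bar>f b\<bar> \<le> K * wgt s1 b"
  shows "integrable P f"
proof -
  have "integrable P (\<lambda>b. K * wgt s1 b)" using int_wgt[OF assms(1)] by auto
  then show ?thesis
  proof (rule Bochner_Integration.integrable_bound)
    show "f \<in> borel_measurable P" using assms(2) by (simp add: measurable_cong_sets[OF P_sets refl])
    show "AE x in P. norm (f x) \<le> norm (K * wgt s1 x)"
      by (intro AE_I2) (simp add: order_trans[OF assms(3) abs_ge_self])
  qed
qed

definition "Gm c s = (\<integral>b. fm c s b \<partial>P)"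
definition "Gp c s = (\<integral>b. fp c s b \<partial>P)"

lemma Gm_dc:
  assumes s: "0 < s1" "s1 \<le> s" and c0: "0 < c0" "c0 < C"
  shows "((\<lambda>c. Gm c s) has_real_derivative (\<integral>b. dmc c0 s b \<partial>P)) (at c0)"
  unfolding Gm_def
proof (rule deriv_integral[where ?x1.0=0 and ?x2.0=C and w="\<lambda>b. s\<^sup>2 * (4 * C + 4) * wgt s1 b"])
  show "0 < c0" "c0 < C" by fact+
  show "((\<lambda>c. fm c s b) has_real_derivative dmc c s b) (at c)" for c b by (rule fm_dc)
  show "\<bar>dmc c s b\<bar> \<le> s\<^sup>2 * (4 * C + 4) * wgt s1 b" if "0 < c" "c < C" for c b
    using dmc_bound[of s1 C c s s b] s that by simp
  show "integrable P (\<lambda>b. s\<^sup>2 * (4 * C + 4) * wgt s1 b)" using int_wgt s by auto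
  show "integrable P (fm c0 s)"
    using fm_bound[of s1 C c0 s s b for b] s c0 by (intro int_bounded[OF s(1), where K="s\<^sup>2 * (2 * C\<^sup>2 + 2 * C + 7)"]) auto
  show "fm c s \<in> borel_measurable P" for c by measurable
  show "dmc c0 s \<in> borel_measurable P" by measurable
qed

lemma Gp_dc:
  assumes s: "0 < s1" "s1 \<le> s" and c0: "0 < c0" "c0 < C"
  shows "((\<lambda>c. Gp c s) has_real_derivative (\<integral>b. dpc c0 s b \<partial>P)) (at c0)"
  unfolding Gp_def
proof (rule deriv_integral[where ?x1.0=0 and ?x2.0=C and w="\<lambda>b. 2 * wgt s1 b"])
  show "0 < c0" "c0 < C" by fact+
  show "((\<lambda>c. fp c s b) has_real_derivative dpc c s b) (at c)" for c b by (rule fp_dc)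
  show "\<bar>dpc c s b\<bar> \<le> 2 * wgt s1 b" for c b
    using dpc_bound[of s1 0] s by simp
  show "integrable P (\<lambda>b. 2 * wgt s1 b)" using int_wgt s by auto
  show "integrable P (fp c0 s)"
    using fp_bound[of s1 0] s by (intro int_bounded[OF s(1), where K=2]) auto
  show "fp c s \<in> borel_measurable P" for c by measurable
  show "dpc c0 s \<in> borel_measurable P" by measurable
qed

lemma Gm_ds:
  assumes s: "0 < s1" "s1 < s0" "s0 < S" and c: "0 \<le> c" "c \<le> C"
  shows "((\<lambda>s. Gm c s) has_real_derivative (\<integral>b. dms c s0 b \<partial>P)) (at s0)"
  unfolding Gm_def
proof (rule deriv_integral[where ?x1.0=s1 and ?x2.0=S and w="\<lambda>b. 2 * S * (2 * C\<^sup>2 + 2 * C + 8) * wgt s1 b"])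
  show "s1 < s0" "s0 < S" by fact+
  show "((\<lambda>s. fm c s b) has_real_derivative dms c s b) (at s)" if "s1 < s" for s b
    using that s by (intro fm_ds) auto
  show "\<bar>dms c s b\<bar> \<le> 2 * S * (2 * C\<^sup>2 + 2 * C + 8) * wgt s1 b" if "s1 < s" "s < S" for s b
    using dms_bound[of s1 C c s S b] s c that by simp
  show "integrable P (\<lambda>b. 2 * S * (2 * C\<^sup>2 + 2 * C + 8) * wgt s1 b)" using int_wgt s by auto
  show "integrable P (fm c s0)"
    using fm_bound[of s1 C c s0 S b for b] s c by (intro int_bounded[OF s(1), where K="S\<^sup>2 * (2 * C\<^sup>2 + 2 * C + 7)"]) auto
  show "fm c s \<in> borel_measurable P" for s by measurable
  show "dms c s0 \<in> borel_measurable P" by measurable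
qed

lemma Gp_ds:
  assumes s: "0 < s1" "s1 < s0" "s0 < S"
  shows "((\<lambda>s. Gp c s) has_real_derivative (\<integral>b. dps c s0 b \<partial>P)) (at s0)"
  unfolding Gp_def
proof (rule deriv_integral[where ?x1.0=s1 and ?x2.0=S and w="\<lambda>b. (1/s1) * wgt s1 b"])
  show "s1 < s0" "s0 < S" by fact+
  show "((\<lambda>s. fp c s b) has_real_derivative dps c s b) (at s)" if "s1 < s" for s b
    using that s by (intro fp_ds) auto
  show "\<bar>dps c s b\<bar> \<le> (1/s1) * wgt s1 b" if "s1 < s" "s < S" for s b
    using dps_bound[of s1 0 s c b] s that by simp
  show "integrable P (\<lambda>b. (1/s1) * wgt s1 b)" using int_wgt s by auto
  show "integrable P (fp c s0)"
    using fp_bound[of s1 0] s by (intro int_bounded[OF s(1), where K=2]) auto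
  show "fp c s \<in> borel_measurable P" for s by measurable
  show "dps c s0 \<in> borel_measurable P" by measurable
qed

lemma cont_Gms:
  assumes s: "0 < s1" "s1 < s0" "s0 < S" and c: "0 < c0" "c0 < C"
  shows "continuous (at (c0, s0)) (\<lambda>p. \<integral>b. dms (fst p) (snd p) b \<partial>P)"
proof (rule cont_integral[where S="{0<..<C} \<times> {s1<..<S}" and w="\<lambda>b. 2 * S * (2 * C\<^sup>2 + 2 * C + 8) * wgt s1 b"])
  show "open ({0<..<C} \<times> {s1<..<S})" by (intro open_Times) auto
  show "(c0, s0) \<in> {0<..<C} \<times> {s1<..<S}" using s c by auto
  show "continuous (at (c0, s0)) (\<lambda>p. dms (fst p) (snd p) b)" for b
    using s by (intro cont_dms) auto
  show "(\<lambda>b. dms (fst p) (snd p) b) \<in> borel_measurable P" for p by measurable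
  show "\<bar>dms (fst p) (snd p) b\<bar> \<le> 2 * S * (2 * C\<^sup>2 + 2 * C + 8) * wgt s1 b"
    if "p \<in> {0<..<C} \<times> {s1<..<S}" for p b
    using that dms_bound[of s1 C "fst p" "snd p" S b] s by auto
  show "integrable P (\<lambda>b. 2 * S * (2 * C\<^sup>2 + 2 * C + 8) * wgt s1 b)" using int_wgt s by auto
qed

lemma cont_Gps:
  assumes s: "0 < s1" "s1 < s0" "s0 < S" and c: "0 < c0" "c0 < C"
  shows "continuous (at (c0, s0)) (\<lambda>p. \<integral>b. dps (fst p) (snd p) b \<partial>P)"
proof (rule cont_integral[where S="{0<..<C} \<times> {s1<..<S}" and w="\<lambda>b. (1/s1) * wgt s1 b"])
  show "open ({0<..<C} \<times> {s1<..<S})" by (intro open_Times) auto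
  show "(c0, s0) \<in> {0<..<C} \<times> {s1<..<S}" using s c by auto
  show "continuous (at (c0, s0)) (\<lambda>p. dps (fst p) (snd p) b)" for b
    using s by (intro cont_dps) auto
  show "(\<lambda>b. dps (fst p) (snd p) b) \<in> borel_measurable P" for p by measurable
  show "\<bar>dps (fst p) (snd p) b\<bar> \<le> (1/s1) * wgt s1 b"
    if "p \<in> {0<..<C} \<times> {s1<..<S}" for p b
    using that dps_bound[of s1 0 "snd p" "fst p" b] s by auto
  show "integrable P (\<lambda>b. (1/s1) * wgt s1 b)" using int_wgt s by auto
qed

end


lemma implicit_deriv:
  fixes F :: "real \<times> real \<Rightarrow> real" and y :: "real \<Rightarrow> real"
  assumes FD: "(F has_derivative (\<lambda>(u, v). a * u + b * v)) (at (x0, y x0))"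
    and b: "b \<noteq> 0"
    and zero: "\<forall>\<^sub>F x in at x0. F (x, y x) = 0" and z0: "F (x0, y x0) = 0"
    and ycont: "isCont y x0"
  shows "(y has_real_derivative (- a / b)) (at x0)"
proof -
  define y0 where "y0 = y x0"
  define R where "R x = norm (F (x, y x) - F (x0, y0) - (\<lambda>(u, v). a * u + b * v) ((x, y x) - (x0, y0))) / norm ((x, y x) - (x0, y0))" for x
  have lim0: "((\<lambda>p. norm (F p - F (x0, y0) - (\<lambda>(u, v). a * u + b * v) (p - (x0, y0))) / norm (p - (x0, y0))) \<longlongrightarrow> 0) (at (x0, y0))"
    using FD unfolding has_derivative_iff_norm y0_def by blast
  have g: "filterlim (\<lambda>x. (x, y x)) (at (x0, y0)) (at x0)"
  proof (rule filterlim_atI)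
    show "((\<lambda>x. (x, y x)) \<longlongrightarrow> (x0, y0)) (at x0)"
      using ycont unfolding y0_def isCont_def by (intro tendsto_Pair tendsto_ident_at) auto
    show "\<forall>\<^sub>F x in at x0. (x, y x) \<noteq> (x0, y0)"
      unfolding eventually_at_filter by (rule always_eventually) auto
  qed
  have Rlim: "(R \<longlongrightarrow> 0) (at x0)"
    unfolding R_def[abs_def] by (rule filterlim_compose[OF lim0 g])
  define C where "C = (2 * \<bar>a\<bar> + \<bar>b\<bar>) / \<bar>b\<bar>"
  have bpos: "\<bar>b\<bar> > 0" using b by simp
  have ev_small: "\<forall>\<^sub>F x in at x0. R x < \<bar>b\<bar> / 2"
    using Rlim bpos by (intro order_tendstoD) auto
  have key: "\<forall>\<^sub>F x in at x0. \<bar>(y x - y0) / (x - x0) - (- a / b)\<bar> \<le> R x * (1 + C) / \<bar>b\<bar>"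
    using ev_small zero eventually_neq_at_within[of x0 x0 UNIV]
  proof (eventually_elim)
    case (elim x)
    show ?case
    proof (cases "x = x0")
      case True
      then show ?thesis using elim by simp
    next
      case False
      define h where "h = x - x0"
      define k where "k = y x - y0"
      have hne: "h \<noteq> 0" using False by (simp add: h_def)
      have Rx: "R x = \<bar>a * h + b * k\<bar> / norm (h, k)"
      proof -
        have neg: "\<bar>- u - v\<bar> = \<bar>u + v\<bar>" for u v :: real by linarith
        show ?thesis unfolding R_def using elim z0 by (simp add: y0_def h_def k_def neg)
      qed
      have np: "norm (h, k) > 0" using hne by (simp add: zero_prod_def)
      have nle: "norm (h, k) \<le> \<bar>h\<bar> + \<bar>k\<bar>" using norm_Pair_le[of h k] by simp
      have Rn: "\<bar>a * h + b * k\<bar> = R x * norm (h, k)" using Rx np by simp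
      have R0: "0 \<le> R x" unfolding R_def by simp
      have i1: "\<bar>a * h + b * k\<bar> \<le> R x * (\<bar>h\<bar> + \<bar>k\<bar>)"
        unfolding Rn using R0 nle by (intro mult_left_mono) auto
      have i2: "\<bar>b\<bar> * \<bar>k\<bar> \<le> \<bar>a * h + b * k\<bar> + \<bar>a\<bar> * \<bar>h\<bar>"
        by (metis abs_mult abs_triangle_ineq4 add_diff_cancel_left' diff_le_eq)
      have i3: "R x * (\<bar>h\<bar> + \<bar>k\<bar>) \<le> \<bar>b\<bar> / 2 * (\<bar>h\<bar> + \<bar>k\<bar>)"
        using elim R0 by (intro mult_right_mono) auto
      have "\<bar>b\<bar> * \<bar>k\<bar> \<le> \<bar>b\<bar> / 2 * (\<bar>h\<bar> + \<bar>k\<bar>) + \<bar>a\<bar> * \<bar>h\<bar>"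
        using i1 i2 i3 by linarith
      moreover have "\<bar>b\<bar> / 2 * (\<bar>h\<bar> + \<bar>k\<bar>) = (\<bar>b\<bar> * \<bar>h\<bar>) / 2 + (\<bar>b\<bar> * \<bar>k\<bar>) / 2"
        by (simp add: algebra_simps)
      moreover have "(2 * \<bar>a\<bar> + \<bar>b\<bar>) * \<bar>h\<bar> = 2 * (\<bar>a\<bar> * \<bar>h\<bar>) + \<bar>b\<bar> * \<bar>h\<bar>"
        by (simp add: algebra_simps)
      ultimately have "\<bar>b\<bar> * \<bar>k\<bar> \<le> (2 * \<bar>a\<bar> + \<bar>b\<bar>) * \<bar>h\<bar>"
        by linarith
      then have kC: "\<bar>k\<bar> \<le> C * \<bar>h\<bar>"
        unfolding C_def using bpos by (simp add: field_simps mult.commute)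
      have "\<bar>k / h - (- a / b)\<bar> = \<bar>a * h + b * k\<bar> / (\<bar>b\<bar> * \<bar>h\<bar>)"
        using hne b by (simp add: field_simps abs_divide abs_mult[symmetric])
      also have "\<dots> \<le> R x * (\<bar>h\<bar> + \<bar>k\<bar>) / (\<bar>b\<bar> * \<bar>h\<bar>)"
        using i1 hne bpos by (intro divide_right_mono) auto
      also have "\<dots> \<le> R x * (\<bar>h\<bar> + C * \<bar>h\<bar>) / (\<bar>b\<bar> * \<bar>h\<bar>)"
        using kC R0 hne bpos by (intro divide_right_mono mult_left_mono) auto
      also have "\<dots> = R x * (1 + C) / \<bar>b\<bar>"
        using hne bpos by (simp add: field_simps)
      finally show ?thesis by (simp add: h_def k_def)
    qed
  qed
  have "((\<lambda>x. R x * (1 + C) / \<bar>b\<bar>) \<longlongrightarrow> 0 * (1 + C) / \<bar>b\<bar>) (at x0)"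
    using bpos by (intro tendsto_intros Rlim) auto
  then have g0: "((\<lambda>x. R x * (1 + C) / \<bar>b\<bar>) \<longlongrightarrow> 0) (at x0)" by simp
  have key': "\<forall>\<^sub>F x in at x0. norm ((y x - y0) / (x - x0) - (- a / b)) \<le> R x * (1 + C) / \<bar>b\<bar>"
    using key by (simp only: real_norm_def)
  have "((\<lambda>x. (y x - y0) / (x - x0) - (- a / b)) \<longlongrightarrow> 0) (at x0)"
    by (rule Lim_null_comparison[OF key' g0])
  then have "((\<lambda>x. (y x - y0) / (x - x0)) \<longlongrightarrow> - a / b) (at x0)"
    by (rule LIM_zero_cancel)
  then show ?thesis unfolding has_field_derivative_iff y0_def .
qed

lemma root_cont:
  fixes H :: "real \<Rightarrow> real \<Rightarrow> real" and y :: "real \<Rightarrow> real"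
  assumes U: "open U" "x0 \<in> U"
    and root: "\<And>x. x \<in> U \<Longrightarrow> 0 < y x \<and> H x (y x) = 0"
    and uniq: "\<And>x s. x \<in> U \<Longrightarrow> 0 < s \<Longrightarrow> H x s = 0 \<Longrightarrow> s = y x"
    and r: "0 < r" "r < y x0"
    and Hs: "((\<lambda>s. H x0 s) has_real_derivative d) (at (y x0))" "0 < d"
    and contx: "\<And>s. y x0 - r < s \<Longrightarrow> s < y x0 + r \<Longrightarrow> isCont (\<lambda>x. H x s) x0"
    and conts: "\<forall>\<^sub>F x in at x0. \<forall>s. y x0 - r < s \<longrightarrow> s < y x0 + r \<longrightarrow> isCont (\<lambda>s. H x s) s"
  shows "isCont y x0"
  unfolding isCont_def
proof (rule tendstoI)
  fix e :: real assume e: "0 < e"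
  define y0 where "y0 = y x0"
  have H0: "H x0 y0 = 0" using root U by (simp add: y0_def)
  obtain d1 where d1: "d1 > 0" "\<And>h. h > 0 \<Longrightarrow> h < d1 \<Longrightarrow> H x0 y0 < H x0 (y0 + h)"
    using DERIV_pos_inc_right[OF Hs] unfolding y0_def by blast
  obtain d2 where d2: "d2 > 0" "\<And>h. h > 0 \<Longrightarrow> h < d2 \<Longrightarrow> H x0 (y0 - h) < H x0 y0"
    using DERIV_pos_inc_left[OF Hs] unfolding y0_def by blast
  define t where "t = min (min e r) (min d1 d2) / 2"
  have t: "0 < t" "t < e" "t < r" "t < d1" "t < d2" using e r d1 d2 by (auto simp: t_def)
  have A: "0 < H x0 (y0 + t)" using d1(2)[of t] t H0 by simp
  have B: "H x0 (y0 - t) < 0" using d2(2)[of t] t H0 by simp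
  have cA: "isCont (\<lambda>x. H x (y0 + t)) x0" using contx[of "y0 + t"] t r by (simp add: y0_def)
  have cB: "isCont (\<lambda>x. H x (y0 - t)) x0" using contx[of "y0 - t"] t r by (simp add: y0_def)
  have evA: "\<forall>\<^sub>F x in at x0. 0 < H x (y0 + t)"
    using order_tendstoD(1)[OF cA[unfolded isCont_def] A] .
  have evB: "\<forall>\<^sub>F x in at x0. H x (y0 - t) < 0"
    using order_tendstoD(2)[OF cB[unfolded isCont_def] B] .
  have evU: "\<forall>\<^sub>F x in at x0. x \<in> U"
    using U by (rule eventually_at_in_open')
  show "\<forall>\<^sub>F x in at x0. dist (y x) (y x0) < e"
    using evA evB evU conts
  proof eventually_elim
    case (elim x)
    have "continuous_on {y0 - t .. y0 + t} (H x)"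
      using elim(4) t r unfolding y0_def
      by (intro continuous_at_imp_continuous_on ballI) auto
    then obtain s where s: "y0 - t \<le> s" "s \<le> y0 + t" "H x s = 0"
      using IVT'[of "H x" "y0 - t" 0 "y0 + t"] elim(1,2) t by auto
    have "0 < s" using s t r by (simp add: y0_def)
    then have "s = y x" using uniq[OF elim(3) _ s(3)] by simp
    then show ?case using s t by (simp add: dist_real_def y0_def abs_le_iff)
  qed
qed


lemma frechet2:
  fixes F :: "real \<Rightarrow> real \<Rightarrow> real" and B :: "real \<Rightarrow> real \<Rightarrow> real"
  assumes x0: "x1 < x0" "x0 < x2" and y0: "y1 < y0" "y0 < y2"
    and fx: "((\<lambda>x. F x y0) has_real_derivative A) (at x0)"
    and fy: "\<And>x y. x1 < x \<Longrightarrow> x < x2 \<Longrightarrow> y1 < y \<Longrightarrow> y < y2 \<Longrightarrow> ((\<lambda>y. F x y) has_real_derivative B x y) (at y)"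
    and cont: "continuous (at (x0, y0)) (\<lambda>p. B (fst p) (snd p))"
  shows "((\<lambda>p. F (fst p) (snd p)) has_derivative (\<lambda>(u, v). A * u + B x0 y0 * v)) (at (x0, y0))"
proof -
  have "((\<lambda>(x, y). F x y) has_derivative (\<lambda>(tx, ty). (*) A tx + blinfun_apply (blinfun_mult_right (B x0 y0)) ty))
      (at (x0, y0) within {x1<..<x2} \<times> {y1<..<y2})"
  proof (rule has_derivative_partialsI[where fy="\<lambda>x y. blinfun_mult_right (B x y)"])
    show "((\<lambda>x. F x y0) has_derivative (*) A) (at x0 within {x1<..<x2})"
      using fx unfolding has_field_derivative_def by (rule has_derivative_at_withinI)
    show "((\<lambda>y. F x y) has_derivative blinfun_apply (blinfun_mult_right (B x y))) (at y within {y1<..<y2})"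
      if "x \<in> {x1<..<x2}" "y \<in> {y1<..<y2}" for x y
      using fy[of x y] that unfolding has_field_derivative_def
      by (auto intro: has_derivative_at_withinI)
    show "continuous (at (x0, y0) within {x1<..<x2} \<times> {y1<..<y2}) (\<lambda>(x, y). blinfun_mult_right (B x y))"
    proof -
      have "continuous (at (x0, y0)) (\<lambda>p. blinfun_mult_right (B (fst p) (snd p)))"
        by (rule bounded_linear.continuous[OF bounded_linear_blinfun_mult_right cont])
      then show ?thesis unfolding split_beta' by (rule continuous_at_imp_continuous_within)
    qed
    show "y0 \<in> {y1<..<y2}" using y0 by simp
    show "convex {y1<..<y2}" by simp
  qed
  moreover have "at (x0, y0) within {x1<..<x2} \<times> {y1<..<y2} = at (x0, y0)"
    using x0 y0 by (intro at_within_open) (auto intro: open_Times)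
  ultimately show ?thesis by (simp add: split_beta')
qed

lemma Qt_antimono: "a \<le> b \<Longrightarrow> Qt b \<le> Qt a"
  unfolding Qt_def using hb_tail0[of a] hb_tail0[of b]
  by (intro integral_mono) (auto simp: has_bochner_integral_iff split: split_indicator)

lemma pp_le1: "0 \<le> c \<Longrightarrow> pp m c \<le> 1"
  unfolding pp_def using Qt_antimono[of "- c - m" "c - m"] by simp

lemma phi_mono_sq: "y\<^sup>2 \<le> x\<^sup>2 \<Longrightarrow> phi x \<le> phi y"
  unfolding phi_eq by (intro divide_right_mono) auto

lemma rho_nonneg:
  assumes "0 \<le> c" shows "0 \<le> m * (phi (c - m) - phi (c + m))"
proof (cases "0 \<le> m")
  case True
  have "(c - m)\<^sup>2 \<le> (c + m)\<^sup>2" using True assms by (simp add: power2_eq_square algebra_simps)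
  then have "phi (c + m) \<le> phi (c - m)" by (rule phi_mono_sq)
  then show ?thesis using True by simp
next
  case False
  have "c * m \<le> 0" using False assms by (simp add: mult_nonneg_nonpos)
  then have "(c + m)\<^sup>2 \<le> (c - m)\<^sup>2" by (simp add: power2_eq_square algebra_simps)
  then have "phi (c - m) \<le> phi (c + m)" by (rule phi_mono_sq)
  then show ?thesis using False by (simp add: mult_nonpos_nonpos)
qed

lemma rr_decomp:
  "rr m c = (1 + c\<^sup>2) * pp m c - c * qq m c - m * (phi (c - m) - phi (c + m)) + m\<^sup>2 * (1 - pp m c)"
  unfolding rr_def qq_def by (simp add: algebra_simps)

lemma final_pos:
  fixes A Dn c s Pb Qb Rb :: real
  assumes A: "0 < A" and Dn: "0 < Dn" and c: "0 < c" and s: "0 < s"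
    and Q: "0 \<le> Qb" and R: "0 \<le> Rb" and Pb: "0 \<le> Pb"
    and Dn_eq: "Dn = A + Rb - c * (c * Pb - Qb)"
  shows "0 < s * A + c * s * Qb + c * (s * (c * Pb - Qb) / Dn) * (A + Rb)"
proof (cases "c * Pb - Qb \<ge> 0")
  case True
  have "0 \<le> c * (s * (c * Pb - Qb) / Dn) * (A + Rb)"
    using True c s Dn A R by simp
  moreover have "0 < s * A" using s A by simp
  moreover have "0 \<le> c * s * Qb" using c s Q by simp
  ultimately show ?thesis by linarith
next
  case False
  define x where "x = c * Pb - Qb"
  have x: "x < 0" using False by (simp add: x_def)
  have "A * Dn + c * Qb * Dn + c * x * (A + Rb) = A * (A + Rb) + c * Qb * A + c\<^sup>2 * (- x) * Qb + c\<^sup>2 * Rb * Pb"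
    unfolding Dn_eq x_def by (simp add: algebra_simps power2_eq_square)
  also have "\<dots> > 0"
  proof -
    have "0 < A * (A + Rb)" using A R by simp
    moreover have "0 \<le> c * Qb * A" using c Q A by simp
    moreover have "0 \<le> c\<^sup>2 * (- x) * Qb" using x Q by (intro mult_nonneg_nonneg) auto
    moreover have "0 \<le> c\<^sup>2 * Rb * Pb" using R Pb by simp
    ultimately show ?thesis by linarith
  qed
  finally have pos: "0 < A * Dn + c * Qb * Dn + c * x * (A + Rb)" .
  have "s * A + c * s * Qb + c * (s * x / Dn) * (A + Rb) = (s / Dn) * (A * Dn + c * Qb * Dn + c * x * (A + Rb))"
    using Dn by (simp add: field_simps)
  also have "\<dots> > 0" using pos s Dn by simp
  finally show ?thesis by (simp add: x_def)
qed


theorem lemma9: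
  fixes P :: "real measure" and \<delta> \<sigma>z2 chi :: real
    and U :: "real set" and sigma_hat :: "real \<Rightarrow> real"
  assumes P_prob: "prob_space P"
    and P_sets: "sets P = sets borel"
    and P_moment: "integrable P (\<lambda>b. b\<^sup>2)"
    and delta: "0 < \<delta>" "\<delta> < 1"
    and noise: "0 < \<sigma>z2"
    and U_open: "open U" and U_pos: "U \<subseteq> {0<..}" and chi_U: "chi \<in> U"
    and sigma_hat_sol: "\<And>c. c \<in> U \<Longrightarrow> 0 < sigma_hat c \<and> fp_eq P \<delta> \<sigma>z2 c (sigma_hat c)"
    and sigma_hat_unique: "\<And>c s. c \<in> U \<Longrightarrow> 0 < s \<Longrightarrow> fp_eq P \<delta> \<sigma>z2 c s \<Longrightarrow> s = sigma_hat c"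
    and lambda_pos: "0 < lasso_lambda P \<delta> chi (sigma_hat chi)"
  shows "\<exists>D > 0. ((\<lambda>c. lasso_lambda P \<delta> c (sigma_hat c)) has_real_derivative D) (at chi)"
proof -
  interpret P: prob_space P by (rule P_prob)
  have P_sets'[measurable_cong]: "sets P = sets borel" by (rule P_sets)
  have Upos: "\<And>x. x \<in> U \<Longrightarrow> 0 < x" using U_pos by auto
  have chi_pos: "0 < chi" using Upos chi_U by simp
  define s0 where "s0 = sigma_hat chi"
  have s0: "0 < s0" "fp_eq P \<delta> \<sigma>z2 chi s0" using sigma_hat_sol[OF chi_U] by (auto simp: s0_def)
  define C where "C = chi + 1"
  define s1 where "s1 = s0 / 2"
  define S where "S = 2 * s0"
  have C: "chi < C" "0 < C" using chi_pos by (auto simp: C_def)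
  have s1: "0 < s1" "s1 < s0" "s0 < S" using s0 by (auto simp: s1_def S_def)
  note Gm_def' = Gm_def[OF P_prob P_sets P_moment]
  note Gp_def' = Gp_def[OF P_prob P_sets P_moment]
  have mseq: "lasso_mse P c s = Gm P c s" if "0 < c" "0 < s" for c s
    using mse_eq[OF P_prob P_sets that(2,1)] by (simp add: Gm_def' fm_def)
  have probeq: "lasso_prob P c s = Gp P c s" if "0 < c" "0 < s" for c s
    using prob_eq[OF P_prob P_sets that(2,1)] by (simp add: Gp_def' fp_def)
  define H where "H c s = s\<^sup>2 - \<sigma>z2 - (1/\<delta>) * Gm P c s" for c s
  have fpH: "fp_eq P \<delta> \<sigma>z2 c s \<longleftrightarrow> H c s = 0" if "0 < c" "0 < s" for c s
    unfolding fp_eq_def H_def using mseq[OF that] by auto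
  define Hc where "Hc = - (1/\<delta>) * (\<integral>b. dmc chi s0 b \<partial>P)"
  define Hs where "Hs c s = 2 * s - (1/\<delta>) * (\<integral>b. dms c s b \<partial>P)" for c s
  have dGmc: "((\<lambda>c. Gm P c s) has_real_derivative (\<integral>b. dmc c0 s b \<partial>P)) (at c0)"
    if "s1 \<le> s" "0 < c0" "c0 < C" for s c0
    using Gm_dc[OF P_prob P_sets P_moment s1(1) that] .
  have dHc: "((\<lambda>c. H c s0) has_real_derivative Hc) (at chi)"
    unfolding H_def Hc_def
    using dGmc[of s0 chi] s1 chi_pos C delta
    by (auto intro!: derivative_eq_intros)
  have dHs: "((\<lambda>s. H c s) has_real_derivative Hs c s) (at s)"
    if "0 < c" "c < C" "s1 < s" "s < S" for c s
  proof -
    have "((\<lambda>s. Gm P c s) has_real_derivative (\<integral>b. dms c s b \<partial>P)) (at s)"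
      using Gm_ds[OF P_prob P_sets P_moment s1(1) that(3,4), of c C] that by simp
    then show ?thesis unfolding H_def Hs_def using delta
      by (auto intro!: derivative_eq_intros)
  qed
  have cHs: "continuous (at (chi, s0)) (\<lambda>p. Hs (fst p) (snd p))"
    unfolding Hs_def
    using cont_Gms[OF P_prob P_sets P_moment s1 chi_pos C(1)]
    by (intro continuous_intros) auto
  have HD: "((\<lambda>p. H (fst p) (snd p)) has_derivative (\<lambda>(u, v). Hc * u + Hs chi s0 * v)) (at (chi, s0))"
    by (rule frechet2[OF chi_pos C(1) s1(2,3) dHc dHs cHs])
  define mu where "mu b = b / s0" for b
  have wgt0: "wgt s0 b = 1 + (mu b)\<^sup>2" for b
    using wgt_def[OF s0(1), of 0 b] by (simp add: mu_def)
  have intb: "integrable P f" if "f \<in> borel_measurable borel" "\<And>b. \<bar>f b\<bar> \<le> K * wgt s0 b" for f K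
    by (rule int_bounded[OF P_prob P_sets P_moment s0(1) that])
  define Pb where "Pb = (\<integral>b. pp (mu b) chi \<partial>P)"
  define Qb where "Qb = (\<integral>b. qq (mu b) chi \<partial>P)"
  define Rb where "Rb = (\<integral>b. mu b * (phi (chi - mu b) - phi (chi + mu b)) \<partial>P)"
  define Mb where "Mb = (\<integral>b. (mu b)\<^sup>2 * (1 - pp (mu b) chi) \<partial>P)"
  define gb where "gb = (\<integral>b. rr (mu b) chi \<partial>P)"
  have hbP: "has_bochner_integral P (\<lambda>b. pp (mu b) chi) Pb"
  proof -
    have "integrable P (\<lambda>b. pp (mu b) chi)"
    proof (rule intb[of _ 2])
      show "(\<lambda>b. pp (mu b) chi) \<in> borel_measurable borel" unfolding mu_def pp_def by measurable
      show "\<bar>pp (mu b) chi\<bar> \<le> 2 * wgt s0 b" for b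
        using pp_bounds[of "mu b" chi] wgt_pos[OF s0(1) order.refl, of b] by simp
    qed
    then show ?thesis by (simp add: has_bochner_integral_iff Pb_def)
  qed
  have hbQ: "has_bochner_integral P (\<lambda>b. qq (mu b) chi) Qb"
  proof -
    have "integrable P (\<lambda>b. qq (mu b) chi)"
    proof (rule intb[of _ 2])
      show "(\<lambda>b. qq (mu b) chi) \<in> borel_measurable borel" unfolding mu_def qq_def by measurable
      show "\<bar>qq (mu b) chi\<bar> \<le> 2 * wgt s0 b" for b
        using qq_bounds[of "mu b" chi] wgt_pos[OF s0(1) order.refl, of b] by simp
    qed
    then show ?thesis by (simp add: has_bochner_integral_iff Qb_def)
  qed
  have hbR: "has_bochner_integral P (\<lambda>b. mu b * (phi (chi - mu b) - phi (chi + mu b))) Rb"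
  proof -
    have "integrable P (\<lambda>b. mu b * (phi (chi - mu b) - phi (chi + mu b)))"
    proof (rule intb[of _ 1])
      show "(\<lambda>b. mu b * (phi (chi - mu b) - phi (chi + mu b))) \<in> borel_measurable borel"
        unfolding mu_def by measurable
      show "\<bar>mu b * (phi (chi - mu b) - phi (chi + mu b))\<bar> \<le> 1 * wgt s0 b" for b
      proof -
        have d: "\<bar>phi (chi - mu b) - phi (chi + mu b)\<bar> \<le> 1"
          using phi_pos[of "chi - mu b"] phi_le1[of "chi - mu b"] phi_pos[of "chi + mu b"] phi_le1[of "chi + mu b"]
          by simp
        have "\<bar>mu b * (phi (chi - mu b) - phi (chi + mu b))\<bar> \<le> \<bar>mu b\<bar> * 1"
          unfolding abs_mult using d by (intro mult_left_mono) auto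
        also have "\<dots> \<le> 1 * wgt s0 b" using abs_le_sq[of "mu b"] by (simp add: wgt0)
        finally show ?thesis .
      qed
    qed
    then show ?thesis by (simp add: has_bochner_integral_iff Rb_def)
  qed
  have hbM: "has_bochner_integral P (\<lambda>b. (mu b)\<^sup>2 * (1 - pp (mu b) chi)) Mb"
  proof -
    have "integrable P (\<lambda>b. (mu b)\<^sup>2 * (1 - pp (mu b) chi))"
    proof (rule intb[of _ 1])
      show "(\<lambda>b. (mu b)\<^sup>2 * (1 - pp (mu b) chi)) \<in> borel_measurable borel"
        unfolding mu_def pp_def by measurable
      show "\<bar>(mu b)\<^sup>2 * (1 - pp (mu b) chi)\<bar> \<le> 1 * wgt s0 b" for b
      proof -
        have "\<bar>1 - pp (mu b) chi\<bar> \<le> 1" using pp_bounds[of "mu b" chi] by simp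
        then have "\<bar>(mu b)\<^sup>2 * (1 - pp (mu b) chi)\<bar> \<le> (mu b)\<^sup>2 * 1"
          unfolding abs_mult abs_power2 by (intro mult_left_mono) auto
        then show ?thesis by (simp add: wgt0)
      qed
    qed
    then show ?thesis by (simp add: has_bochner_integral_iff Mb_def)
  qed
  have hbg: "has_bochner_integral P (\<lambda>b. rr (mu b) chi) gb"
  proof -
    have "integrable P (\<lambda>b. rr (mu b) chi)"
    proof (rule intb[of _ "2 * chi\<^sup>2 + 2 * chi + 7"])
      show "(\<lambda>b. rr (mu b) chi) \<in> borel_measurable borel"
        unfolding mu_def rr_def pp_def by measurable
      show "\<bar>rr (mu b) chi\<bar> \<le> (2 * chi\<^sup>2 + 2 * chi + 7) * wgt s0 b" for b
        using rr_wbound[OF s0(1), of chi chi s0 b] chi_pos by (simp add: mu_def)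
    qed
    then show ?thesis by (simp add: has_bochner_integral_iff gb_def)
  qed
  have I1: "(\<integral>b. dmc chi s0 b \<partial>P) = s0\<^sup>2 * (2 * chi * Pb - 2 * Qb)"
  proof -
    have "has_bochner_integral P (\<lambda>b. s0\<^sup>2 * (2 * chi * pp (mu b) chi - 2 * qq (mu b) chi)) (s0\<^sup>2 * (2 * chi * Pb - 2 * Qb))"
      by (intro has_bochner_integral_mult_right has_bochner_integral_diff hbP hbQ)
    then show ?thesis by (simp add: dmc_def[abs_def] mu_def has_bochner_integral_iff)
  qed
  have I2: "(\<integral>b. dms chi s0 b \<partial>P) = 2 * s0 * gb - 2 * s0 * Mb"
  proof -
    have "has_bochner_integral P (\<lambda>b. (2 * s0) * rr (mu b) chi - (2 * s0) * ((mu b)\<^sup>2 * (1 - pp (mu b) chi))) (2 * s0 * gb - 2 * s0 * Mb)"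
      by (intro has_bochner_integral_mult_right has_bochner_integral_diff hbg hbM)
    moreover have "(\<lambda>b. (2 * s0) * rr (mu b) chi - (2 * s0) * ((mu b)\<^sup>2 * (1 - pp (mu b) chi))) = dms chi s0"
      by (simp add: fun_eq_iff dms_def mu_def)
    ultimately show ?thesis by (simp add: has_bochner_integral_iff)
  qed
  have I3: "(\<integral>b. dpc chi s0 b \<partial>P) = - Qb"
  proof -
    have "has_bochner_integral P (\<lambda>b. - qq (mu b) chi) (- Qb)"
      by (intro has_bochner_integral_minus hbQ)
    then show ?thesis by (simp add: dpc_def[abs_def] mu_def has_bochner_integral_iff)
  qed
  have I4: "(\<integral>b. dps chi s0 b \<partial>P) = - (1/s0) * Rb"
  proof -
    have "has_bochner_integral P (\<lambda>b. (- (1/s0)) * (mu b * (phi (chi - mu b) - phi (chi + mu b)))) (- (1/s0) * Rb)"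
      by (intro has_bochner_integral_mult_right hbR)
    moreover have "(\<lambda>b. (- (1/s0)) * (mu b * (phi (chi - mu b) - phi (chi + mu b)))) = dps chi s0"
      by (simp add: fun_eq_iff dps_def mu_def)
    ultimately have "has_bochner_integral P (dps chi s0) (- (1/s0) * Rb)" by (simp only:)
    then show ?thesis by (rule has_bochner_integral_integral_eq)
  qed
  have I5: "gb = (1 + chi\<^sup>2) * Pb - chi * Qb - Rb + Mb"
  proof -
    have "has_bochner_integral P (\<lambda>b. (1 + chi\<^sup>2) * pp (mu b) chi - chi * qq (mu b) chi - mu b * (phi (chi - mu b) - phi (chi + mu b)) + (mu b)\<^sup>2 * (1 - pp (mu b) chi))
       ((1 + chi\<^sup>2) * Pb - chi * Qb - Rb + Mb)"
      by (intro has_bochner_integral_mult_right has_bochner_integral_diff has_bochner_integral_add hbP hbQ hbR hbM)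
    moreover have "(\<lambda>b. (1 + chi\<^sup>2) * pp (mu b) chi - chi * qq (mu b) chi - mu b * (phi (chi - mu b) - phi (chi + mu b)) + (mu b)\<^sup>2 * (1 - pp (mu b) chi)) = (\<lambda>b. rr (mu b) chi)"
      by (simp add: fun_eq_iff rr_decomp)
    ultimately show ?thesis using hbg by (metis has_bochner_integral_eq)
  qed
  have I6: "Gm P chi s0 = s0\<^sup>2 * gb"
  proof -
    have "has_bochner_integral P (\<lambda>b. s0\<^sup>2 * rr (mu b) chi) (s0\<^sup>2 * gb)"
      by (intro has_bochner_integral_mult_right hbg)
    then show ?thesis by (simp add: Gm_def' fm_def[abs_def] mu_def has_bochner_integral_iff)
  qed
  have I7: "Gp P chi s0 = Pb"
    using hbP by (simp add: Gp_def' fp_def[abs_def] mu_def has_bochner_integral_iff)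
  have Qb_nn: "0 \<le> Qb" unfolding Qb_def using qq_bounds by (intro Bochner_Integration.integral_nonneg) auto
  have Pb_nn: "0 \<le> Pb" unfolding Pb_def using pp_bounds by (intro Bochner_Integration.integral_nonneg) auto
  have Rb_nn: "0 \<le> Rb" unfolding Rb_def using rho_nonneg chi_pos by (intro Bochner_Integration.integral_nonneg) auto
  have Mb_nn: "0 \<le> Mb" unfolding Mb_def using pp_le1 chi_pos by (intro Bochner_Integration.integral_nonneg) auto
  have fix0: "s0\<^sup>2 = \<sigma>z2 + (1/\<delta>) * (s0\<^sup>2 * gb)"
    using s0(2) mseq[OF chi_pos s0(1)] I6 by (simp add: fp_eq_def)
  have dg: "0 < \<delta> - gb"
  proof -
    have "s0\<^sup>2 * (\<delta> - gb) = \<delta> * \<sigma>z2" using fix0 delta by (simp add: field_simps)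
    moreover have "0 < \<delta> * \<sigma>z2" using delta noise by simp
    ultimately have "0 < s0\<^sup>2 * (\<delta> - gb)" by simp
    then show ?thesis using s0(1) by (simp add: zero_less_mult_iff)
  qed
  define A where "A = \<delta> - Pb"
  have A_pos: "0 < A"
  proof -
    have lp: "0 < chi * s0 * (1 - (1/\<delta>) * Pb)"
      using lambda_pos probeq[OF chi_pos s0(1)] I7 by (simp add: lasso_lambda_def s0_def)
    have cs: "0 < chi * s0" using chi_pos s0(1) by simp
    have "0 < 1 - (1/\<delta>) * Pb" using zero_less_mult_pos[OF lp cs] .
    then show ?thesis using delta by (simp add: A_def field_simps)
  qed
  define Dn where "Dn = \<delta> - gb + Mb"
  have Dn_pos: "0 < Dn" using dg Mb_nn by (simp add: Dn_def)
  have Hs0: "Hs chi s0 = (2 * s0 / \<delta>) * Dn"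
    unfolding Hs_def I2 Dn_def using delta by (simp add: field_simps)
  have Hs0_pos: "0 < Hs chi s0" unfolding Hs0 using s0 delta Dn_pos by simp
  have rootH: "0 < sigma_hat x \<and> H x (sigma_hat x) = 0" if "x \<in> U" for x
    using sigma_hat_sol[OF that] fpH[OF Upos[OF that]] by auto
  have uniqH: "s = sigma_hat x" if "x \<in> U" "0 < s" "H x s = 0" for x s
    using sigma_hat_unique[OF that(1,2)] fpH[OF Upos[OF that(1)] that(2)] that(3) by simp
  have ycont: "isCont sigma_hat chi"
  proof (rule root_cont[where H=H and r="s0/2" and d="Hs chi s0", OF U_open chi_U rootH uniqH])
    show "0 < s0 / 2" "s0 / 2 < sigma_hat chi" using s0 by (auto simp: s0_def)
    show "((\<lambda>s. H chi s) has_real_derivative Hs chi s0) (at (sigma_hat chi))"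
      using dHs[OF chi_pos C(1) s1(2,3)] by (simp add: s0_def)
    show "0 < Hs chi s0" by (rule Hs0_pos)
    show "isCont (\<lambda>x. H x s) chi" if "sigma_hat chi - s0 / 2 < s" "s < sigma_hat chi + s0 / 2" for s
    proof -
      have "s1 \<le> s" using that by (simp add: s1_def s0_def)
      then have "((\<lambda>c. Gm P c s) has_real_derivative (\<integral>b. dmc chi s b \<partial>P)) (at chi)"
        using dGmc chi_pos C by simp
      then have "((\<lambda>c. H c s) has_real_derivative (- (1/\<delta>) * (\<integral>b. dmc chi s b \<partial>P))) (at chi)"
        unfolding H_def using delta by (auto intro!: derivative_eq_intros)
      then show ?thesis by (rule DERIV_isCont)
    qed
    show "\<forall>\<^sub>F x in at chi. \<forall>s. sigma_hat chi - s0 / 2 < s \<longrightarrow> s < sigma_hat chi + s0 / 2 \<longrightarrow> isCont (\<lambda>s. H x s) s"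
    proof -
      have evC: "\<forall>\<^sub>F x in at chi. x \<in> {0<..<C}"
        by (rule eventually_at_in_open') (use chi_pos C in auto)
      then show ?thesis
    proof eventually_elim
      case (elim x)
      show ?case
      proof (intro allI impI)
        fix s assume "sigma_hat chi - s0 / 2 < s" "s < sigma_hat chi + s0 / 2"
        then have "s1 < s" "s < S" using s0 by (auto simp: s1_def S_def s0_def)
        then show "isCont (\<lambda>s. H x s) s" using dHs[of x s] elim by (auto intro: DERIV_isCont)
      qed
    qed
    qed
  qed
  define sdv where "sdv = - Hc / Hs chi s0"
  have sd: "(sigma_hat has_real_derivative sdv) (at chi)"
  proof -
    have "(sigma_hat has_real_derivative (- Hc / Hs chi (sigma_hat chi))) (at chi)"
    proof (rule implicit_deriv[where F="\<lambda>p. H (fst p) (snd p)"])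
      show "((\<lambda>p. H (fst p) (snd p)) has_derivative (\<lambda>(u, v). Hc * u + Hs chi (sigma_hat chi) * v)) (at (chi, sigma_hat chi))"
        using HD by (simp add: s0_def)
      show "Hs chi (sigma_hat chi) \<noteq> 0" using Hs0_pos by (simp add: s0_def)
      show "\<forall>\<^sub>F x in at chi. H (fst (x, sigma_hat x)) (snd (x, sigma_hat x)) = 0"
        using eventually_at_in_open'[OF U_open chi_U] by eventually_elim (simp add: rootH)
      show "H (fst (chi, sigma_hat chi)) (snd (chi, sigma_hat chi)) = 0" using rootH[OF chi_U] by simp
      show "isCont sigma_hat chi" by (rule ycont)
    qed
    then show ?thesis by (simp add: sdv_def s0_def)
  qed
  define Gpc where "Gpc = (\<integral>b. dpc chi s0 b \<partial>P)"
  define Gps where "Gps c s = (\<integral>b. dps c s b \<partial>P)" for c s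
  have GD: "((\<lambda>p. Gp P (fst p) (snd p)) has_derivative (\<lambda>(u, v). Gpc * u + Gps chi s0 * v)) (at (chi, s0))"
  proof (rule frechet2[OF chi_pos C(1) s1(2,3)])
    show "((\<lambda>c. Gp P c s0) has_real_derivative Gpc) (at chi)"
      unfolding Gpc_def using Gp_dc[OF P_prob P_sets P_moment s1(1) _ chi_pos C(1), of s0] s1 by simp
    show "((\<lambda>s. Gp P c s) has_real_derivative Gps c s) (at s)" if "0 < c" "c < C" "s1 < s" "s < S" for c s
      unfolding Gps_def using Gp_ds[OF P_prob P_sets P_moment s1(1) that(3,4)] .
    show "continuous (at (chi, s0)) (\<lambda>p. Gps (fst p) (snd p))"
      unfolding Gps_def using cont_Gps[OF P_prob P_sets P_moment s1 chi_pos C(1)] .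
  qed
  have pair: "((\<lambda>c. (c, sigma_hat c)) has_derivative (\<lambda>h. (h, sdv * h))) (at chi)"
    using has_derivative_Pair[OF has_derivative_ident sd[unfolded has_field_derivative_def]] by simp
  define DG where "DG = Gpc + Gps chi s0 * sdv"
  have comp: "((\<lambda>c. Gp P c (sigma_hat c)) has_real_derivative DG) (at chi)"
  proof -
    have GD': "((\<lambda>p. Gp P (fst p) (snd p)) has_derivative (\<lambda>(u, v). Gpc * u + Gps chi s0 * v)) (at (chi, sigma_hat chi))"
      using GD by (simp add: s0_def)
    have "((\<lambda>c. Gp P (fst (c, sigma_hat c)) (snd (c, sigma_hat c))) has_derivative
        (\<lambda>h. (\<lambda>(u, v). Gpc * u + Gps chi s0 * v) (h, sdv * h))) (at chi)"
      by (rule has_derivative_compose[OF pair GD'])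
    then have "((\<lambda>c. Gp P c (sigma_hat c)) has_derivative
        (\<lambda>h. (\<lambda>(u, v). Gpc * u + Gps chi s0 * v) (h, sdv * h))) (at chi)"
      by simp
    then have "((\<lambda>c. Gp P c (sigma_hat c)) has_derivative (*) DG) (at chi)"
      by (rule has_derivative_eq_rhs) (simp add: fun_eq_iff DG_def algebra_simps)
    then show ?thesis unfolding has_field_derivative_def .
  qed
  define DL where "DL = (sigma_hat chi + chi * sdv) * (1 - (1/\<delta>) * Gp P chi (sigma_hat chi)) + chi * sigma_hat chi * (- (1/\<delta>) * DG)"
  have dL0: "((\<lambda>c. c * sigma_hat c * (1 - (1/\<delta>) * Gp P c (sigma_hat c))) has_real_derivative DL) (at chi)"
    unfolding DL_def using delta by (auto intro!: derivative_eq_intros sd comp simp: field_simps)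
  have dL: "((\<lambda>c. lasso_lambda P \<delta> c (sigma_hat c)) has_real_derivative DL) (at chi)"
  proof (rule has_field_derivative_transform_within_open[OF dL0 U_open chi_U])
    fix x assume x: "x \<in> U"
    show "x * sigma_hat x * (1 - (1/\<delta>) * Gp P x (sigma_hat x)) = lasso_lambda P \<delta> x (sigma_hat x)"
      using probeq[OF Upos[OF x]] rootH[OF x] by (simp add: lasso_lambda_def)
  qed
  have sdv_eq: "sdv = s0 * (chi * Pb - Qb) / Dn"
    unfolding sdv_def Hs0 Hc_def I1 using delta s0(1) Dn_pos by (simp add: field_simps power2_eq_square)
  have DL_eq: "DL = (1/\<delta>) * (s0 * A + chi * s0 * Qb + chi * sdv * (A + Rb))"
    unfolding DL_def DG_def Gpc_def Gps_def I3 I4 A_def using I7 delta s0(1)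
    by (simp add: s0_def[symmetric] field_simps)
  have Dn_eq: "Dn = A + Rb - chi * (chi * Pb - Qb)"
    unfolding Dn_def A_def I5 by (simp add: algebra_simps power2_eq_square)
  have "0 < s0 * A + chi * s0 * Qb + chi * (s0 * (chi * Pb - Qb) / Dn) * (A + Rb)"
    by (rule final_pos[OF A_pos Dn_pos chi_pos s0(1) Qb_nn Rb_nn Pb_nn Dn_eq])
  then have "0 < DL" unfolding DL_eq sdv_eq using delta by simp
  then show ?thesis using dL by blast
qed


end
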